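(* For all integers $r$ and all $k\in\{0,1,2,3\}$, the space $\mathcal P_r\Lambda^k(T^3)$ has a basis that is $S_4$-invariant up to sign.
   Context: $T^3\subset\mathbb R^4$ is the standard simplex $\{\lambda_i\ge0,\ \sum\lambda_i=1\}$. $\mathcal P_r\Lambda^k(T^3)$ is the space of restrictions to $T^3$ of $k$-forms on $\mathbb R^4$ with polynomial coefficients of degree at most $r$ (zero if $r<0$). $S_4$ acts by pullback: for $\pi\in S_4$, $S_\pi(\lambda_0,\dots,\lambda_3)=(\lambda_{\pi(0)},\dots,\lambda_{\pi(3)})$ and $\pi$ acts by $S_\pi^*$. A basis is invariant up to sign if every group element maps each basis element to plus or minus a basis element. *)

theory Defs
  imports "HOL-Analysis.Analysis" "HOL-Library.Function_Algebras"
begin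

text \<open>Points of R^4 are vectors in real^4; coordinates lambda_0..lambda_3 are indexed by the type 4.\<close>

definition T3 :: "(real^4) set" where
  "T3 = {x. (\<forall>i. 0 \<le> x $ i) \<and> (\<Sum>i\<in>UNIV. x $ i) = 1}"

text \<open>Tangent space of T3 (direction of its affine hull).\<close>
definition tangentV :: "(real^4) set" where
  "tangentV = {v. (\<Sum>i\<in>UNIV. v $ i) = 0}"

text \<open>Polynomial functions on R^4 of total degree at most r (the zero function if r < 0).\<close>
definition poly_fun :: "int \<Rightarrow> (real^4 \<Rightarrow> real) \<Rightarrow> bool" where
  "poly_fun r p \<longleftrightarrow> (\<exists>c :: (4 \<Rightarrow> nat) \<Rightarrow> real.
      p = (\<lambda>x. \<Sum>\<alpha>\<in>{\<alpha> :: 4 \<Rightarrow> nat. int (sum \<alpha> UNIV) \<le> r}.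
                 c \<alpha> * (\<Prod>i\<in>UNIV. (x $ i) ^ (\<alpha> i))))"

text \<open>Value of d lambda_{s 0} wedge ... wedge d lambda_{s (k-1)} on the vectors vs 0, ..., vs (k-1):
  the determinant of the k x k matrix (vs j) $ (s i).\<close>
definition wedge_dl :: "nat \<Rightarrow> (nat \<Rightarrow> 4) \<Rightarrow> (nat \<Rightarrow> real^4) \<Rightarrow> real" where
  "wedge_dl k s vs = (\<Sum>\<tau> | \<tau> permutes {..<k}. of_int (sign \<tau>) * (\<Prod>i<k. vs (\<tau> i) $ s i))"

text \<open>The k-form sum_s p_s(x) d lambda_s on R^4, evaluated at x on vectors vs.\<close>
definition form_eval :: "nat \<Rightarrow> ((nat \<Rightarrow> 4) \<Rightarrow> real^4 \<Rightarrow> real) \<Rightarrow> real^4 \<Rightarrow> (nat \<Rightarrow> real^4) \<Rightarrow> real" where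
  "form_eval k p x vs = (\<Sum>s\<in>PiE {..<k} (\<lambda>_. UNIV). p s x * wedge_dl k s vs)"

text \<open>Restriction (trace) to T3: only base points in T3 and tangent vectors of T3 matter;
  elsewhere the value is normalised to 0, so that equality of restricted forms is equality of functions.\<close>
definition restr_T3 :: "nat \<Rightarrow> (real^4 \<Rightarrow> (nat \<Rightarrow> real^4) \<Rightarrow> real) \<Rightarrow> real^4 \<Rightarrow> (nat \<Rightarrow> real^4) \<Rightarrow> real" where
  "restr_T3 k f = (\<lambda>x vs. if x \<in> T3 \<and> (\<forall>j<k. vs j \<in> tangentV) then f x vs else 0)"

definition PrLk :: "int \<Rightarrow> nat \<Rightarrow> (real^4 \<Rightarrow> (nat \<Rightarrow> real^4) \<Rightarrow> real) set" where
  "PrLk r k = {restr_T3 k (form_eval k p) | p. \<forall>s. poly_fun r (p s)}"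

definition fscale :: "real \<Rightarrow> (real^4 \<Rightarrow> (nat \<Rightarrow> real^4) \<Rightarrow> real) \<Rightarrow> (real^4 \<Rightarrow> (nat \<Rightarrow> real^4) \<Rightarrow> real)" where
  "fscale c f = (\<lambda>x vs. c * f x vs)"

definition S_perm :: "(4 \<Rightarrow> 4) \<Rightarrow> real^4 \<Rightarrow> real^4" where
  "S_perm \<pi> x = (\<chi> i. x $ \<pi> i)"

text \<open>Pullback S_pi^* of a form: (S^* w)_x(v_1,...,v_k) = w_{S x}(S v_1, ..., S v_k) (S is linear).\<close>
definition pullback :: "(4 \<Rightarrow> 4) \<Rightarrow> (real^4 \<Rightarrow> (nat \<Rightarrow> real^4) \<Rightarrow> real) \<Rightarrow> (real^4 \<Rightarrow> (nat \<Rightarrow> real^4) \<Rightarrow> real)" where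
  "pullback \<pi> f = (\<lambda>x vs. f (S_perm \<pi> x) (\<lambda>j. S_perm \<pi> (vs j)))"

end

theory Submission
  imports Defs
begin

lemma d4: "(1::4) \<noteq> 2" "(1::4) \<noteq> 3" "(1::4) \<noteq> 4" "(2::4) \<noteq> 3" "(2::4) \<noteq> 4" "(3::4) \<noteq> 4"
  by simp_all

interpretation FM: module fscale
  by unfold_locales (auto simp: fscale_def fun_eq_iff algebra_simps)

definition ev :: "(4\<Rightarrow>real) \<Rightarrow> real^4 \<Rightarrow> real" where "ev g v = (\<Sum>m\<in>UNIV. g m * v$m)"
definition W :: "nat \<Rightarrow> (nat \<Rightarrow> 4 \<Rightarrow> real) \<Rightarrow> (nat \<Rightarrow> real^4) \<Rightarrow> real" where
 "W k f vs = (\<Sum>\<tau> | \<tau> permutes {..<k}. of_int (sign \<tau>) * (\<Prod>i<k. ev (f i) (vs (\<tau> i))))"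

lemma W0: "W 0 f vs = 1"
  by (simp add: W_def sign_id)
lemma W1: "W 1 f vs = ev (f 0) (vs 0)"
  by (simp add: W_def sign_id lessThan_Suc)
lemma W2: "W 2 f vs = ev (f 0) (vs 0) * ev (f 1) (vs 1) - ev (f 0) (vs 1) * ev (f 1) (vs 0)"
proof -
  have e: "{..<2::nat} = insert 0 {1}" by auto
  have f: "finite {1::nat}" "0 \<notin> {1::nat}" by auto
  show ?thesis unfolding W_def e sum_over_permutations_insert[OF f] permutes_sing
    by (simp add: sign_swap_id sign_id swap_id_eq lessThan_Suc)
qed
lemma W3: "W 3 f vs =
   ev (f 0) (vs 0) * ev (f 1) (vs 1) * ev (f 2) (vs 2)
 - ev (f 0) (vs 0) * ev (f 1) (vs 2) * ev (f 2) (vs 1)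
 - ev (f 0) (vs 1) * ev (f 1) (vs 0) * ev (f 2) (vs 2)
 + ev (f 0) (vs 1) * ev (f 1) (vs 2) * ev (f 2) (vs 0)
 + ev (f 0) (vs 2) * ev (f 1) (vs 0) * ev (f 2) (vs 1)
 - ev (f 0) (vs 2) * ev (f 1) (vs 1) * ev (f 2) (vs 0)"
proof -
  have e: "{..<3::nat} = insert 0 (insert 1 {2})" by auto
  have f: "finite (insert 1 {2::nat})" "0 \<notin> insert 1 {2::nat}" by auto
  have g: "finite {2::nat}" "1 \<notin> {2::nat}" by auto
  show ?thesis unfolding W_def e sum_over_permutations_insert[OF f] sum_over_permutations_insert[OF g] permutes_sing
    by (simp add: sign_swap_id sign_id swap_id_eq lessThan_Suc permutation_swap_id sign_compose algebra_simps)
qed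

definition dl :: "4 \<Rightarrow> 4 \<Rightarrow> real" where "dl a m = (if m = a then 1 else 0)"

lemma ev_dl: "ev (dl a) v = v $ a"
proof -
  have h: "(\<lambda>m. dl a m * v$m) = (\<lambda>m. if m = a then v$m else 0)" by (auto simp: dl_def)
  show ?thesis unfolding ev_def h by simp
qed
lemma ev_add: "ev (\<lambda>m. g m + h m) v = ev g v + ev h v"
  by (simp add: ev_def sum.distrib algebra_simps)
lemma ev_diff: "ev (\<lambda>m. g m - h m) v = ev g v - ev h v"
  by (simp add: ev_def sum_subtractf algebra_simps)

definition F :: "nat \<Rightarrow> 4\<times>4\<times>4\<times>4 \<Rightarrow> nat \<Rightarrow> 4 \<Rightarrow> real" where
 "F k t i = (case t of (a,b,c,d) \<Rightarrow>
    if k = 1 then (\<lambda>m. dl a m + dl b m - dl c m - dl d m)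
    else if k = 2 then (if i = 0 then (\<lambda>m. dl a m - dl b m) else (\<lambda>m. dl c m - dl d m))
    else (if i = 0 then (\<lambda>m. dl a m - dl b m) else if i = 1 then (\<lambda>m. dl a m - dl c m)
          else (\<lambda>m. dl a m - dl d m)))"

definition Om :: "nat \<Rightarrow> 4\<times>4\<times>4\<times>4 \<Rightarrow> (nat \<Rightarrow> real^4) \<Rightarrow> real" where
  "Om k t = W k (F k t)"

lemma Om0: "Om 0 t vs = 1" by (simp add: Om_def W0)
lemma Om1: "Om 1 (a,b,c,d) vs = vs 0 $ a + vs 0 $ b - vs 0 $ c - vs 0 $ d"
  unfolding Om_def W1 by (simp add: F_def ev_add ev_diff ev_dl)
lemma Om2: "Om 2 (a,b,c,d) vs = (vs 0 $ a - vs 0 $ b) * (vs 1 $ c - vs 1 $ d) - (vs 1 $ a - vs 1 $ b) * (vs 0 $ c - vs 0 $ d)"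
  unfolding Om_def W2 by (simp add: F_def ev_add ev_diff ev_dl)
lemma Om3: "Om 3 (a,b,c,d) vs = 
   (vs 0 $ a - vs 0 $ b) * (vs 1 $ a - vs 1 $ c) * (vs 2 $ a - vs 2 $ d)
 - (vs 0 $ a - vs 0 $ b) * (vs 2 $ a - vs 2 $ c) * (vs 1 $ a - vs 1 $ d)
 - (vs 1 $ a - vs 1 $ b) * (vs 0 $ a - vs 0 $ c) * (vs 2 $ a - vs 2 $ d)
 + (vs 1 $ a - vs 1 $ b) * (vs 2 $ a - vs 2 $ c) * (vs 0 $ a - vs 0 $ d)
 + (vs 2 $ a - vs 2 $ b) * (vs 0 $ a - vs 0 $ c) * (vs 1 $ a - vs 1 $ d)
 - (vs 2 $ a - vs 2 $ b) * (vs 1 $ a - vs 1 $ c) * (vs 0 $ a - vs 0 $ d)"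
  unfolding Om_def W3 by (simp add: F_def ev_add ev_diff ev_dl)

lemma wedge_W: "wedge_dl k s vs = W k (\<lambda>i. dl (s i)) vs"
  by (simp add: wedge_dl_def W_def ev_dl)

lemma wedge1: "wedge_dl 1 s vs = vs 0 $ s 0" unfolding wedge_W W1 by (simp add: ev_dl)
lemma wedge2: "wedge_dl 2 s vs = vs 0 $ s 0 * vs 1 $ s 1 - vs 1 $ s 0 * vs 0 $ s 1"
  unfolding wedge_W W2 by (simp add: ev_dl)
lemma wedge3: "wedge_dl 3 s vs =
   vs 0 $ s 0 * vs 1 $ s 1 * vs 2 $ s 2
 - vs 0 $ s 0 * vs 2 $ s 1 * vs 1 $ s 2
 - vs 1 $ s 0 * vs 0 $ s 1 * vs 2 $ s 2
 + vs 1 $ s 0 * vs 2 $ s 1 * vs 0 $ s 2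
 + vs 2 $ s 0 * vs 0 $ s 1 * vs 1 $ s 2
 - vs 2 $ s 0 * vs 1 $ s 1 * vs 0 $ s 2"
  unfolding wedge_W W3 by (simp add: ev_dl)

lemma W_expand: "W k f vs = (\<Sum>s\<in>PiE {..<k} (\<lambda>_. UNIV). (\<Prod>i<k. f i (s i)) * wedge_dl k s vs)"
proof -
  have "W k f vs = (\<Sum>\<tau> | \<tau> permutes {..<k}. of_int (sign \<tau>) *
      (\<Sum>s\<in>PiE {..<k} (\<lambda>_. UNIV). \<Prod>i<k. f i (s i) * vs (\<tau> i) $ s i))"
    unfolding W_def ev_def by (simp add: prod_sum_PiE)
  also have "\<dots> = (\<Sum>\<tau> | \<tau> permutes {..<k}. \<Sum>s\<in>PiE {..<k} (\<lambda>_. UNIV).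
      (\<Prod>i<k. f i (s i)) * (of_int (sign \<tau>) * (\<Prod>i<k. vs (\<tau> i) $ s i)))"
    by (simp add: sum_distrib_left prod.distrib algebra_simps)
  also have "\<dots> = (\<Sum>s\<in>PiE {..<k} (\<lambda>_. UNIV). \<Sum>\<tau> | \<tau> permutes {..<k}.
      (\<Prod>i<k. f i (s i)) * (of_int (sign \<tau>) * (\<Prod>i<k. vs (\<tau> i) $ s i)))"
    by (rule sum.swap)
  also have "\<dots> = (\<Sum>s\<in>PiE {..<k} (\<lambda>_. UNIV). (\<Prod>i<k. f i (s i)) * wedge_dl k s vs)"
    by (simp add: wedge_dl_def sum_distrib_left)
  finally show ?thesis .
qed

definition J :: "nat \<Rightarrow> (4\<times>4\<times>4\<times>4) set" where
  "J k = (if k = 1 \<or> k = 2 then {(1,2,3,4),(1,3,2,4),(1,4,2,3)} else {(1,2,3,4)})"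


lemma Om1s: "Om (Suc 0) (a,b,c,d) vs = vs 0 $ a + vs 0 $ b - vs 0 $ c - vs 0 $ d"
  using Om1[of a b c d vs] by simp
lemma Om2s: "Om (Suc (Suc 0)) (a,b,c,d) vs = (vs 0 $ a - vs 0 $ b) * (vs 1 $ c - vs 1 $ d) - (vs 1 $ a - vs 1 $ b) * (vs 0 $ c - vs 0 $ d)"
  using Om2[of a b c d vs] by (simp add: numeral_2_eq_2)
lemma Om3s: "Om (Suc (Suc (Suc 0))) (a,b,c,d) vs = 
   (vs 0 $ a - vs 0 $ b) * (vs 1 $ a - vs 1 $ c) * (vs 2 $ a - vs 2 $ d)
 - (vs 0 $ a - vs 0 $ b) * (vs 2 $ a - vs 2 $ c) * (vs 1 $ a - vs 1 $ d)
 - (vs 1 $ a - vs 1 $ b) * (vs 0 $ a - vs 0 $ c) * (vs 2 $ a - vs 2 $ d)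
 + (vs 1 $ a - vs 1 $ b) * (vs 2 $ a - vs 2 $ c) * (vs 0 $ a - vs 0 $ d)
 + (vs 2 $ a - vs 2 $ b) * (vs 0 $ a - vs 0 $ c) * (vs 1 $ a - vs 1 $ d)
 - (vs 2 $ a - vs 2 $ b) * (vs 1 $ a - vs 1 $ c) * (vs 0 $ a - vs 0 $ d)"
  using Om3[of a b c d vs] by (simp add: numeral_3_eq_3)
lemmas OmAll = Om1 Om2 Om3 Om1s Om2s Om3s

definition P :: "nat \<Rightarrow> 4\<times>4\<times>4\<times>4 \<Rightarrow> bool" where
  "P k t0 = (\<exists>t\<in>J k. (\<forall>vs. Om k t0 vs = Om k t vs) \<or> (\<forall>vs. Om k t0 vs = - Om k t vs))"

lemma P1_1234: "P 1 (1,2,3,4)"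
  unfolding P_def J_def
  by (rule bexI[where x="(1,2,3,4)"]) (simp_all add: OmAll algebra_simps)

lemma P1_1243: "P 1 (1,2,4,3)"
  unfolding P_def J_def
  by (rule bexI[where x="(1,2,3,4)"]) (simp_all add: OmAll algebra_simps)

lemma P1_1324: "P 1 (1,3,2,4)"
  unfolding P_def J_def
  by (rule bexI[where x="(1,3,2,4)"]) (simp_all add: OmAll algebra_simps)

lemma P1_1342: "P 1 (1,3,4,2)"
  unfolding P_def J_def
  by (rule bexI[where x="(1,3,2,4)"]) (simp_all add: OmAll algebra_simps)

lemma P1_1423: "P 1 (1,4,2,3)"
  unfolding P_def J_def
  by (rule bexI[where x="(1,4,2,3)"]) (simp_all add: OmAll algebra_simps)

lemma P1_1432: "P 1 (1,4,3,2)"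
  unfolding P_def J_def
  by (rule bexI[where x="(1,4,2,3)"]) (simp_all add: OmAll algebra_simps)

lemma P1_2134: "P 1 (2,1,3,4)"
  unfolding P_def J_def
  by (rule bexI[where x="(1,2,3,4)"]) (simp_all add: OmAll algebra_simps)

lemma P1_2143: "P 1 (2,1,4,3)"
  unfolding P_def J_def
  by (rule bexI[where x="(1,2,3,4)"]) (simp_all add: OmAll algebra_simps)

lemma P1_2314: "P 1 (2,3,1,4)"
  unfolding P_def J_def
  by (rule bexI[where x="(1,4,2,3)"]) (simp_all add: OmAll algebra_simps)

lemma P1_2341: "P 1 (2,3,4,1)"
  unfolding P_def J_def
  by (rule bexI[where x="(1,4,2,3)"]) (simp_all add: OmAll algebra_simps)

lemma P1_2413: "P 1 (2,4,1,3)"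
  unfolding P_def J_def
  by (rule bexI[where x="(1,3,2,4)"]) (simp_all add: OmAll algebra_simps)

lemma P1_2431: "P 1 (2,4,3,1)"
  unfolding P_def J_def
  by (rule bexI[where x="(1,3,2,4)"]) (simp_all add: OmAll algebra_simps)

lemma P1_3124: "P 1 (3,1,2,4)"
  unfolding P_def J_def
  by (rule bexI[where x="(1,3,2,4)"]) (simp_all add: OmAll algebra_simps)

lemma P1_3142: "P 1 (3,1,4,2)"
  unfolding P_def J_def
  by (rule bexI[where x="(1,3,2,4)"]) (simp_all add: OmAll algebra_simps)

lemma P1_3214: "P 1 (3,2,1,4)"
  unfolding P_def J_def
  by (rule bexI[where x="(1,4,2,3)"]) (simp_all add: OmAll algebra_simps)

lemma P1_3241: "P 1 (3,2,4,1)"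
  unfolding P_def J_def
  by (rule bexI[where x="(1,4,2,3)"]) (simp_all add: OmAll algebra_simps)

lemma P1_3412: "P 1 (3,4,1,2)"
  unfolding P_def J_def
  by (rule bexI[where x="(1,2,3,4)"]) (simp_all add: OmAll algebra_simps)

lemma P1_3421: "P 1 (3,4,2,1)"
  unfolding P_def J_def
  by (rule bexI[where x="(1,2,3,4)"]) (simp_all add: OmAll algebra_simps)

lemma P1_4123: "P 1 (4,1,2,3)"
  unfolding P_def J_def
  by (rule bexI[where x="(1,4,2,3)"]) (simp_all add: OmAll algebra_simps)

lemma P1_4132: "P 1 (4,1,3,2)"
  unfolding P_def J_def
  by (rule bexI[where x="(1,4,2,3)"]) (simp_all add: OmAll algebra_simps)

lemma P1_4213: "P 1 (4,2,1,3)"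
  unfolding P_def J_def
  by (rule bexI[where x="(1,3,2,4)"]) (simp_all add: OmAll algebra_simps)

lemma P1_4231: "P 1 (4,2,3,1)"
  unfolding P_def J_def
  by (rule bexI[where x="(1,3,2,4)"]) (simp_all add: OmAll algebra_simps)

lemma P1_4312: "P 1 (4,3,1,2)"
  unfolding P_def J_def
  by (rule bexI[where x="(1,2,3,4)"]) (simp_all add: OmAll algebra_simps)

lemma P1_4321: "P 1 (4,3,2,1)"
  unfolding P_def J_def
  by (rule bexI[where x="(1,2,3,4)"]) (simp_all add: OmAll algebra_simps)

lemma P2_1234: "P 2 (1,2,3,4)"
  unfolding P_def J_def
  by (rule bexI[where x="(1,2,3,4)"]) (simp_all add: OmAll algebra_simps)

lemma P2_1243: "P 2 (1,2,4,3)"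
  unfolding P_def J_def
  by (rule bexI[where x="(1,2,3,4)"]) (simp_all add: OmAll algebra_simps)

lemma P2_1324: "P 2 (1,3,2,4)"
  unfolding P_def J_def
  by (rule bexI[where x="(1,3,2,4)"]) (simp_all add: OmAll algebra_simps)

lemma P2_1342: "P 2 (1,3,4,2)"
  unfolding P_def J_def
  by (rule bexI[where x="(1,3,2,4)"]) (simp_all add: OmAll algebra_simps)

lemma P2_1423: "P 2 (1,4,2,3)"
  unfolding P_def J_def
  by (rule bexI[where x="(1,4,2,3)"]) (simp_all add: OmAll algebra_simps)

lemma P2_1432: "P 2 (1,4,3,2)"
  unfolding P_def J_def
  by (rule bexI[where x="(1,4,2,3)"]) (simp_all add: OmAll algebra_simps)

lemma P2_2134: "P 2 (2,1,3,4)"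
  unfolding P_def J_def
  by (rule bexI[where x="(1,2,3,4)"]) (simp_all add: OmAll algebra_simps)

lemma P2_2143: "P 2 (2,1,4,3)"
  unfolding P_def J_def
  by (rule bexI[where x="(1,2,3,4)"]) (simp_all add: OmAll algebra_simps)

lemma P2_2314: "P 2 (2,3,1,4)"
  unfolding P_def J_def
  by (rule bexI[where x="(1,4,2,3)"]) (simp_all add: OmAll algebra_simps)

lemma P2_2341: "P 2 (2,3,4,1)"
  unfolding P_def J_def
  by (rule bexI[where x="(1,4,2,3)"]) (simp_all add: OmAll algebra_simps)

lemma P2_2413: "P 2 (2,4,1,3)"
  unfolding P_def J_def
  by (rule bexI[where x="(1,3,2,4)"]) (simp_all add: OmAll algebra_simps)

lemma P2_2431: "P 2 (2,4,3,1)"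
  unfolding P_def J_def
  by (rule bexI[where x="(1,3,2,4)"]) (simp_all add: OmAll algebra_simps)

lemma P2_3124: "P 2 (3,1,2,4)"
  unfolding P_def J_def
  by (rule bexI[where x="(1,3,2,4)"]) (simp_all add: OmAll algebra_simps)

lemma P2_3142: "P 2 (3,1,4,2)"
  unfolding P_def J_def
  by (rule bexI[where x="(1,3,2,4)"]) (simp_all add: OmAll algebra_simps)

lemma P2_3214: "P 2 (3,2,1,4)"
  unfolding P_def J_def
  by (rule bexI[where x="(1,4,2,3)"]) (simp_all add: OmAll algebra_simps)

lemma P2_3241: "P 2 (3,2,4,1)"
  unfolding P_def J_def
  by (rule bexI[where x="(1,4,2,3)"]) (simp_all add: OmAll algebra_simps)

lemma P2_3412: "P 2 (3,4,1,2)"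
  unfolding P_def J_def
  by (rule bexI[where x="(1,2,3,4)"]) (simp_all add: OmAll algebra_simps)

lemma P2_3421: "P 2 (3,4,2,1)"
  unfolding P_def J_def
  by (rule bexI[where x="(1,2,3,4)"]) (simp_all add: OmAll algebra_simps)

lemma P2_4123: "P 2 (4,1,2,3)"
  unfolding P_def J_def
  by (rule bexI[where x="(1,4,2,3)"]) (simp_all add: OmAll algebra_simps)

lemma P2_4132: "P 2 (4,1,3,2)"
  unfolding P_def J_def
  by (rule bexI[where x="(1,4,2,3)"]) (simp_all add: OmAll algebra_simps)

lemma P2_4213: "P 2 (4,2,1,3)"
  unfolding P_def J_def
  by (rule bexI[where x="(1,3,2,4)"]) (simp_all add: OmAll algebra_simps)

lemma P2_4231: "P 2 (4,2,3,1)"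
  unfolding P_def J_def
  by (rule bexI[where x="(1,3,2,4)"]) (simp_all add: OmAll algebra_simps)

lemma P2_4312: "P 2 (4,3,1,2)"
  unfolding P_def J_def
  by (rule bexI[where x="(1,2,3,4)"]) (simp_all add: OmAll algebra_simps)

lemma P2_4321: "P 2 (4,3,2,1)"
  unfolding P_def J_def
  by (rule bexI[where x="(1,2,3,4)"]) (simp_all add: OmAll algebra_simps)

lemma P3_1234: "P 3 (1,2,3,4)"
  unfolding P_def J_def
  by (rule bexI[where x="(1,2,3,4)"]) (simp_all add: OmAll algebra_simps)

lemma P3_1243: "P 3 (1,2,4,3)"
  unfolding P_def J_def
  by (rule bexI[where x="(1,2,3,4)"]) (simp_all add: OmAll algebra_simps)

lemma P3_1324: "P 3 (1,3,2,4)"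
  unfolding P_def J_def
  by (rule bexI[where x="(1,2,3,4)"]) (simp_all add: OmAll algebra_simps)

lemma P3_1342: "P 3 (1,3,4,2)"
  unfolding P_def J_def
  by (rule bexI[where x="(1,2,3,4)"]) (simp_all add: OmAll algebra_simps)

lemma P3_1423: "P 3 (1,4,2,3)"
  unfolding P_def J_def
  by (rule bexI[where x="(1,2,3,4)"]) (simp_all add: OmAll algebra_simps)

lemma P3_1432: "P 3 (1,4,3,2)"
  unfolding P_def J_def
  by (rule bexI[where x="(1,2,3,4)"]) (simp_all add: OmAll algebra_simps)

lemma P3_2134: "P 3 (2,1,3,4)"
  unfolding P_def J_def
  by (rule bexI[where x="(1,2,3,4)"]) (simp_all add: OmAll algebra_simps)

lemma P3_2143: "P 3 (2,1,4,3)"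
  unfolding P_def J_def
  by (rule bexI[where x="(1,2,3,4)"]) (simp_all add: OmAll algebra_simps)

lemma P3_2314: "P 3 (2,3,1,4)"
  unfolding P_def J_def
  by (rule bexI[where x="(1,2,3,4)"]) (simp_all add: OmAll algebra_simps)

lemma P3_2341: "P 3 (2,3,4,1)"
  unfolding P_def J_def
  by (rule bexI[where x="(1,2,3,4)"]) (simp_all add: OmAll algebra_simps)

lemma P3_2413: "P 3 (2,4,1,3)"
  unfolding P_def J_def
  by (rule bexI[where x="(1,2,3,4)"]) (simp_all add: OmAll algebra_simps)

lemma P3_2431: "P 3 (2,4,3,1)"
  unfolding P_def J_def
  by (rule bexI[where x="(1,2,3,4)"]) (simp_all add: OmAll algebra_simps)

lemma P3_3124: "P 3 (3,1,2,4)"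
  unfolding P_def J_def
  by (rule bexI[where x="(1,2,3,4)"]) (simp_all add: OmAll algebra_simps)

lemma P3_3142: "P 3 (3,1,4,2)"
  unfolding P_def J_def
  by (rule bexI[where x="(1,2,3,4)"]) (simp_all add: OmAll algebra_simps)

lemma P3_3214: "P 3 (3,2,1,4)"
  unfolding P_def J_def
  by (rule bexI[where x="(1,2,3,4)"]) (simp_all add: OmAll algebra_simps)

lemma P3_3241: "P 3 (3,2,4,1)"
  unfolding P_def J_def
  by (rule bexI[where x="(1,2,3,4)"]) (simp_all add: OmAll algebra_simps)

lemma P3_3412: "P 3 (3,4,1,2)"
  unfolding P_def J_def
  by (rule bexI[where x="(1,2,3,4)"]) (simp_all add: OmAll algebra_simps)

lemma P3_3421: "P 3 (3,4,2,1)"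
  unfolding P_def J_def
  by (rule bexI[where x="(1,2,3,4)"]) (simp_all add: OmAll algebra_simps)

lemma P3_4123: "P 3 (4,1,2,3)"
  unfolding P_def J_def
  by (rule bexI[where x="(1,2,3,4)"]) (simp_all add: OmAll algebra_simps)

lemma P3_4132: "P 3 (4,1,3,2)"
  unfolding P_def J_def
  by (rule bexI[where x="(1,2,3,4)"]) (simp_all add: OmAll algebra_simps)

lemma P3_4213: "P 3 (4,2,1,3)"
  unfolding P_def J_def
  by (rule bexI[where x="(1,2,3,4)"]) (simp_all add: OmAll algebra_simps)

lemma P3_4231: "P 3 (4,2,3,1)"
  unfolding P_def J_def
  by (rule bexI[where x="(1,2,3,4)"]) (simp_all add: OmAll algebra_simps)

lemma P3_4312: "P 3 (4,3,1,2)"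
  unfolding P_def J_def
  by (rule bexI[where x="(1,2,3,4)"]) (simp_all add: OmAll algebra_simps)

lemma P3_4321: "P 3 (4,3,2,1)"
  unfolding P_def J_def
  by (rule bexI[where x="(1,2,3,4)"]) (simp_all add: OmAll algebra_simps)

lemma canon1_all: "\<forall>a\<in>{1,2,3,4::4}. \<forall>b\<in>{1,2,3,4::4}. \<forall>c\<in>{1,2,3,4::4}. \<forall>d\<in>{1,2,3,4::4}. distinct [a,b,c,d] \<longrightarrow> P 1 (a,b,c,d)"
  by (simp only: ball_simps insert_iff empty_iff simp_thms) (simp add: P1_1234[simplified] P1_1243[simplified] P1_1324[simplified] P1_1342[simplified] P1_1423[simplified] P1_1432[simplified] P1_2134[simplified] P1_2143[simplified] P1_2314[simplified] P1_2341[simplified] P1_2413[simplified] P1_2431[simplified] P1_3124[simplified] P1_3142[simplified] P1_3214[simplified] P1_3241[simplified] P1_3412[simplified] P1_3421[simplified] P1_4123[simplified] P1_4132[simplified] P1_4213[simplified] P1_4231[simplified] P1_4312[simplified] P1_4321[simplified])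

lemma canon2_all: "\<forall>a\<in>{1,2,3,4::4}. \<forall>b\<in>{1,2,3,4::4}. \<forall>c\<in>{1,2,3,4::4}. \<forall>d\<in>{1,2,3,4::4}. distinct [a,b,c,d] \<longrightarrow> P 2 (a,b,c,d)"
  by (simp only: ball_simps insert_iff empty_iff simp_thms) (simp add: P2_1234[simplified] P2_1243[simplified] P2_1324[simplified] P2_1342[simplified] P2_1423[simplified] P2_1432[simplified] P2_2134[simplified] P2_2143[simplified] P2_2314[simplified] P2_2341[simplified] P2_2413[simplified] P2_2431[simplified] P2_3124[simplified] P2_3142[simplified] P2_3214[simplified] P2_3241[simplified] P2_3412[simplified] P2_3421[simplified] P2_4123[simplified] P2_4132[simplified] P2_4213[simplified] P2_4231[simplified] P2_4312[simplified] P2_4321[simplified])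

lemma canon3_all: "\<forall>a\<in>{1,2,3,4::4}. \<forall>b\<in>{1,2,3,4::4}. \<forall>c\<in>{1,2,3,4::4}. \<forall>d\<in>{1,2,3,4::4}. distinct [a,b,c,d] \<longrightarrow> P 3 (a,b,c,d)"
  by (simp only: ball_simps insert_iff empty_iff simp_thms) (simp add: P3_1234[simplified] P3_1243[simplified] P3_1324[simplified] P3_1342[simplified] P3_1423[simplified] P3_1432[simplified] P3_2134[simplified] P3_2143[simplified] P3_2314[simplified] P3_2341[simplified] P3_2413[simplified] P3_2431[simplified] P3_3124[simplified] P3_3142[simplified] P3_3214[simplified] P3_3241[simplified] P3_3412[simplified] P3_3421[simplified] P3_4123[simplified] P3_4132[simplified] P3_4213[simplified] P3_4231[simplified] P3_4312[simplified] P3_4321[simplified])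

lemma canon: assumes "distinct [a,b,c,d]" "1 \<le> k" "k \<le> 3" shows "P k (a,b,c,d)"
proof -
  have m: "x \<in> {1,2,3,4::4}" for x using UNIV_4 by auto
  have "k = 1 \<or> k = 2 \<or> k = 3" using assms by auto
  then show ?thesis using canon1_all canon2_all canon3_all m assms(1) by blast
qed

definition Dec :: "nat \<Rightarrow> 4 \<Rightarrow> 4 \<Rightarrow> 4 \<Rightarrow> bool" where
  "Dec k a b c = (\<exists>C. \<forall>vs. (\<forall>j<k. vs j \<in> tangentV) \<longrightarrow>
     wedge_dl k (\<lambda>i. if i = 0 then a else if i = 1 then b else c) vs = (\<Sum>t\<in>J k. C t * Om k t vs))"

lemma tan4: "v \<in> tangentV \<Longrightarrow> v $ 4 = - (v $ 1 + v $ 2 + v $ 3)"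
  by (simp add: tangentV_def sum_4 algebra_simps)

lemma Dec1_1: "Dec 1 1 b c"
  unfolding Dec_def
proof (intro exI[of _ "\<lambda>t. if t = (1,2,3,4) then (1/4) else if t = (1,3,2,4) then (1/4) else (1/4)"] allI impI)
  fix vs :: "nat \<Rightarrow> real^4" assume H: "\<forall>j<1. vs j \<in> tangentV"
  have h: "vs j $ 4 = - (vs j $ 1 + vs j $ 2 + vs j $ 3)" if "j < 1" for j using H that tan4 by blast
  show "wedge_dl 1 (\<lambda>i. if i = 0 then 1 else if i = 1 then b else c) vs = (\<Sum>t\<in>J 1. (\<lambda>t. if t = (1,2,3,4) then (1/4) else if t = (1,3,2,4) then (1/4) else (1/4)) t * Om 1 t vs)"
    unfolding wedge1 by (simp add: J_def OmAll h algebra_simps)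
qed

lemma Dec1_2: "Dec 1 2 b c"
  unfolding Dec_def
proof (intro exI[of _ "\<lambda>t. if t = (1,2,3,4) then (1/4) else if t = (1,3,2,4) then (-1/4) else (-1/4)"] allI impI)
  fix vs :: "nat \<Rightarrow> real^4" assume H: "\<forall>j<1. vs j \<in> tangentV"
  have h: "vs j $ 4 = - (vs j $ 1 + vs j $ 2 + vs j $ 3)" if "j < 1" for j using H that tan4 by blast
  show "wedge_dl 1 (\<lambda>i. if i = 0 then 2 else if i = 1 then b else c) vs = (\<Sum>t\<in>J 1. (\<lambda>t. if t = (1,2,3,4) then (1/4) else if t = (1,3,2,4) then (-1/4) else (-1/4)) t * Om 1 t vs)"
    unfolding wedge1 by (simp add: J_def OmAll h algebra_simps)
qed

lemma Dec1_3: "Dec 1 3 b c"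
  unfolding Dec_def
proof (intro exI[of _ "\<lambda>t. if t = (1,2,3,4) then (-1/4) else if t = (1,3,2,4) then (1/4) else (-1/4)"] allI impI)
  fix vs :: "nat \<Rightarrow> real^4" assume H: "\<forall>j<1. vs j \<in> tangentV"
  have h: "vs j $ 4 = - (vs j $ 1 + vs j $ 2 + vs j $ 3)" if "j < 1" for j using H that tan4 by blast
  show "wedge_dl 1 (\<lambda>i. if i = 0 then 3 else if i = 1 then b else c) vs = (\<Sum>t\<in>J 1. (\<lambda>t. if t = (1,2,3,4) then (-1/4) else if t = (1,3,2,4) then (1/4) else (-1/4)) t * Om 1 t vs)"
    unfolding wedge1 by (simp add: J_def OmAll h algebra_simps)
qed

lemma Dec1_4: "Dec 1 4 b c"
  unfolding Dec_def
proof (intro exI[of _ "\<lambda>t. if t = (1,2,3,4) then (-1/4) else if t = (1,3,2,4) then (-1/4) else (1/4)"] allI impI)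
  fix vs :: "nat \<Rightarrow> real^4" assume H: "\<forall>j<1. vs j \<in> tangentV"
  have h: "vs j $ 4 = - (vs j $ 1 + vs j $ 2 + vs j $ 3)" if "j < 1" for j using H that tan4 by blast
  show "wedge_dl 1 (\<lambda>i. if i = 0 then 4 else if i = 1 then b else c) vs = (\<Sum>t\<in>J 1. (\<lambda>t. if t = (1,2,3,4) then (-1/4) else if t = (1,3,2,4) then (-1/4) else (1/4)) t * Om 1 t vs)"
    unfolding wedge1 by (simp add: J_def OmAll h algebra_simps)
qed

lemma Dec2_11: "Dec 2 1 1 c"
  unfolding Dec_def
proof (intro exI[of _ "\<lambda>t. if t = (1,2,3,4) then (0) else if t = (1,3,2,4) then (0) else (0)"] allI impI)
  fix vs :: "nat \<Rightarrow> real^4" assume H: "\<forall>j<2. vs j \<in> tangentV"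
  have h: "vs j $ 4 = - (vs j $ 1 + vs j $ 2 + vs j $ 3)" if "j < 2" for j using H that tan4 by blast
  show "wedge_dl 2 (\<lambda>i. if i = 0 then 1 else if i = 1 then 1 else c) vs = (\<Sum>t\<in>J 2. (\<lambda>t. if t = (1,2,3,4) then (0) else if t = (1,3,2,4) then (0) else (0)) t * Om 2 t vs)"
    unfolding wedge2 by (simp add: J_def OmAll h algebra_simps)
qed

lemma Dec2_12: "Dec 2 1 2 c"
  unfolding Dec_def
proof (intro exI[of _ "\<lambda>t. if t = (1,2,3,4) then (0) else if t = (1,3,2,4) then (1/4) else (1/4)"] allI impI)
  fix vs :: "nat \<Rightarrow> real^4" assume H: "\<forall>j<2. vs j \<in> tangentV"
  have h: "vs j $ 4 = - (vs j $ 1 + vs j $ 2 + vs j $ 3)" if "j < 2" for j using H that tan4 by blast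
  show "wedge_dl 2 (\<lambda>i. if i = 0 then 1 else if i = 1 then 2 else c) vs = (\<Sum>t\<in>J 2. (\<lambda>t. if t = (1,2,3,4) then (0) else if t = (1,3,2,4) then (1/4) else (1/4)) t * Om 2 t vs)"
    unfolding wedge2 by (simp add: J_def OmAll h algebra_simps)
qed

lemma Dec2_13: "Dec 2 1 3 c"
  unfolding Dec_def
proof (intro exI[of _ "\<lambda>t. if t = (1,2,3,4) then (1/4) else if t = (1,3,2,4) then (0) else (-1/4)"] allI impI)
  fix vs :: "nat \<Rightarrow> real^4" assume H: "\<forall>j<2. vs j \<in> tangentV"
  have h: "vs j $ 4 = - (vs j $ 1 + vs j $ 2 + vs j $ 3)" if "j < 2" for j using H that tan4 by blast
  show "wedge_dl 2 (\<lambda>i. if i = 0 then 1 else if i = 1 then 3 else c) vs = (\<Sum>t\<in>J 2. (\<lambda>t. if t = (1,2,3,4) then (1/4) else if t = (1,3,2,4) then (0) else (-1/4)) t * Om 2 t vs)"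
    unfolding wedge2 by (simp add: J_def OmAll h algebra_simps)
qed

lemma Dec2_14: "Dec 2 1 4 c"
  unfolding Dec_def
proof (intro exI[of _ "\<lambda>t. if t = (1,2,3,4) then (-1/4) else if t = (1,3,2,4) then (-1/4) else (0)"] allI impI)
  fix vs :: "nat \<Rightarrow> real^4" assume H: "\<forall>j<2. vs j \<in> tangentV"
  have h: "vs j $ 4 = - (vs j $ 1 + vs j $ 2 + vs j $ 3)" if "j < 2" for j using H that tan4 by blast
  show "wedge_dl 2 (\<lambda>i. if i = 0 then 1 else if i = 1 then 4 else c) vs = (\<Sum>t\<in>J 2. (\<lambda>t. if t = (1,2,3,4) then (-1/4) else if t = (1,3,2,4) then (-1/4) else (0)) t * Om 2 t vs)"
    unfolding wedge2 by (simp add: J_def OmAll h algebra_simps)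
qed

lemma Dec2_21: "Dec 2 2 1 c"
  unfolding Dec_def
proof (intro exI[of _ "\<lambda>t. if t = (1,2,3,4) then (0) else if t = (1,3,2,4) then (-1/4) else (-1/4)"] allI impI)
  fix vs :: "nat \<Rightarrow> real^4" assume H: "\<forall>j<2. vs j \<in> tangentV"
  have h: "vs j $ 4 = - (vs j $ 1 + vs j $ 2 + vs j $ 3)" if "j < 2" for j using H that tan4 by blast
  show "wedge_dl 2 (\<lambda>i. if i = 0 then 2 else if i = 1 then 1 else c) vs = (\<Sum>t\<in>J 2. (\<lambda>t. if t = (1,2,3,4) then (0) else if t = (1,3,2,4) then (-1/4) else (-1/4)) t * Om 2 t vs)"
    unfolding wedge2 by (simp add: J_def OmAll h algebra_simps)
qed

lemma Dec2_22: "Dec 2 2 2 c"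
  unfolding Dec_def
proof (intro exI[of _ "\<lambda>t. if t = (1,2,3,4) then (0) else if t = (1,3,2,4) then (0) else (0)"] allI impI)
  fix vs :: "nat \<Rightarrow> real^4" assume H: "\<forall>j<2. vs j \<in> tangentV"
  have h: "vs j $ 4 = - (vs j $ 1 + vs j $ 2 + vs j $ 3)" if "j < 2" for j using H that tan4 by blast
  show "wedge_dl 2 (\<lambda>i. if i = 0 then 2 else if i = 1 then 2 else c) vs = (\<Sum>t\<in>J 2. (\<lambda>t. if t = (1,2,3,4) then (0) else if t = (1,3,2,4) then (0) else (0)) t * Om 2 t vs)"
    unfolding wedge2 by (simp add: J_def OmAll h algebra_simps)
qed

lemma Dec2_23: "Dec 2 2 3 c"
  unfolding Dec_def
proof (intro exI[of _ "\<lambda>t. if t = (1,2,3,4) then (-1/4) else if t = (1,3,2,4) then (1/4) else (0)"] allI impI)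
  fix vs :: "nat \<Rightarrow> real^4" assume H: "\<forall>j<2. vs j \<in> tangentV"
  have h: "vs j $ 4 = - (vs j $ 1 + vs j $ 2 + vs j $ 3)" if "j < 2" for j using H that tan4 by blast
  show "wedge_dl 2 (\<lambda>i. if i = 0 then 2 else if i = 1 then 3 else c) vs = (\<Sum>t\<in>J 2. (\<lambda>t. if t = (1,2,3,4) then (-1/4) else if t = (1,3,2,4) then (1/4) else (0)) t * Om 2 t vs)"
    unfolding wedge2 by (simp add: J_def OmAll h algebra_simps)
qed

lemma Dec2_24: "Dec 2 2 4 c"
  unfolding Dec_def
proof (intro exI[of _ "\<lambda>t. if t = (1,2,3,4) then (1/4) else if t = (1,3,2,4) then (0) else (1/4)"] allI impI)
  fix vs :: "nat \<Rightarrow> real^4" assume H: "\<forall>j<2. vs j \<in> tangentV"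
  have h: "vs j $ 4 = - (vs j $ 1 + vs j $ 2 + vs j $ 3)" if "j < 2" for j using H that tan4 by blast
  show "wedge_dl 2 (\<lambda>i. if i = 0 then 2 else if i = 1 then 4 else c) vs = (\<Sum>t\<in>J 2. (\<lambda>t. if t = (1,2,3,4) then (1/4) else if t = (1,3,2,4) then (0) else (1/4)) t * Om 2 t vs)"
    unfolding wedge2 by (simp add: J_def OmAll h algebra_simps)
qed

lemma Dec2_31: "Dec 2 3 1 c"
  unfolding Dec_def
proof (intro exI[of _ "\<lambda>t. if t = (1,2,3,4) then (-1/4) else if t = (1,3,2,4) then (0) else (1/4)"] allI impI)
  fix vs :: "nat \<Rightarrow> real^4" assume H: "\<forall>j<2. vs j \<in> tangentV"
  have h: "vs j $ 4 = - (vs j $ 1 + vs j $ 2 + vs j $ 3)" if "j < 2" for j using H that tan4 by blast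
  show "wedge_dl 2 (\<lambda>i. if i = 0 then 3 else if i = 1 then 1 else c) vs = (\<Sum>t\<in>J 2. (\<lambda>t. if t = (1,2,3,4) then (-1/4) else if t = (1,3,2,4) then (0) else (1/4)) t * Om 2 t vs)"
    unfolding wedge2 by (simp add: J_def OmAll h algebra_simps)
qed

lemma Dec2_32: "Dec 2 3 2 c"
  unfolding Dec_def
proof (intro exI[of _ "\<lambda>t. if t = (1,2,3,4) then (1/4) else if t = (1,3,2,4) then (-1/4) else (0)"] allI impI)
  fix vs :: "nat \<Rightarrow> real^4" assume H: "\<forall>j<2. vs j \<in> tangentV"
  have h: "vs j $ 4 = - (vs j $ 1 + vs j $ 2 + vs j $ 3)" if "j < 2" for j using H that tan4 by blast
  show "wedge_dl 2 (\<lambda>i. if i = 0 then 3 else if i = 1 then 2 else c) vs = (\<Sum>t\<in>J 2. (\<lambda>t. if t = (1,2,3,4) then (1/4) else if t = (1,3,2,4) then (-1/4) else (0)) t * Om 2 t vs)"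
    unfolding wedge2 by (simp add: J_def OmAll h algebra_simps)
qed

lemma Dec2_33: "Dec 2 3 3 c"
  unfolding Dec_def
proof (intro exI[of _ "\<lambda>t. if t = (1,2,3,4) then (0) else if t = (1,3,2,4) then (0) else (0)"] allI impI)
  fix vs :: "nat \<Rightarrow> real^4" assume H: "\<forall>j<2. vs j \<in> tangentV"
  have h: "vs j $ 4 = - (vs j $ 1 + vs j $ 2 + vs j $ 3)" if "j < 2" for j using H that tan4 by blast
  show "wedge_dl 2 (\<lambda>i. if i = 0 then 3 else if i = 1 then 3 else c) vs = (\<Sum>t\<in>J 2. (\<lambda>t. if t = (1,2,3,4) then (0) else if t = (1,3,2,4) then (0) else (0)) t * Om 2 t vs)"
    unfolding wedge2 by (simp add: J_def OmAll h algebra_simps)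
qed

lemma Dec2_34: "Dec 2 3 4 c"
  unfolding Dec_def
proof (intro exI[of _ "\<lambda>t. if t = (1,2,3,4) then (0) else if t = (1,3,2,4) then (1/4) else (-1/4)"] allI impI)
  fix vs :: "nat \<Rightarrow> real^4" assume H: "\<forall>j<2. vs j \<in> tangentV"
  have h: "vs j $ 4 = - (vs j $ 1 + vs j $ 2 + vs j $ 3)" if "j < 2" for j using H that tan4 by blast
  show "wedge_dl 2 (\<lambda>i. if i = 0 then 3 else if i = 1 then 4 else c) vs = (\<Sum>t\<in>J 2. (\<lambda>t. if t = (1,2,3,4) then (0) else if t = (1,3,2,4) then (1/4) else (-1/4)) t * Om 2 t vs)"
    unfolding wedge2 by (simp add: J_def OmAll h algebra_simps)
qed

lemma Dec2_41: "Dec 2 4 1 c"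
  unfolding Dec_def
proof (intro exI[of _ "\<lambda>t. if t = (1,2,3,4) then (1/4) else if t = (1,3,2,4) then (1/4) else (0)"] allI impI)
  fix vs :: "nat \<Rightarrow> real^4" assume H: "\<forall>j<2. vs j \<in> tangentV"
  have h: "vs j $ 4 = - (vs j $ 1 + vs j $ 2 + vs j $ 3)" if "j < 2" for j using H that tan4 by blast
  show "wedge_dl 2 (\<lambda>i. if i = 0 then 4 else if i = 1 then 1 else c) vs = (\<Sum>t\<in>J 2. (\<lambda>t. if t = (1,2,3,4) then (1/4) else if t = (1,3,2,4) then (1/4) else (0)) t * Om 2 t vs)"
    unfolding wedge2 by (simp add: J_def OmAll h algebra_simps)
qed

lemma Dec2_42: "Dec 2 4 2 c"
  unfolding Dec_def
proof (intro exI[of _ "\<lambda>t. if t = (1,2,3,4) then (-1/4) else if t = (1,3,2,4) then (0) else (-1/4)"] allI impI)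
  fix vs :: "nat \<Rightarrow> real^4" assume H: "\<forall>j<2. vs j \<in> tangentV"
  have h: "vs j $ 4 = - (vs j $ 1 + vs j $ 2 + vs j $ 3)" if "j < 2" for j using H that tan4 by blast
  show "wedge_dl 2 (\<lambda>i. if i = 0 then 4 else if i = 1 then 2 else c) vs = (\<Sum>t\<in>J 2. (\<lambda>t. if t = (1,2,3,4) then (-1/4) else if t = (1,3,2,4) then (0) else (-1/4)) t * Om 2 t vs)"
    unfolding wedge2 by (simp add: J_def OmAll h algebra_simps)
qed

lemma Dec2_43: "Dec 2 4 3 c"
  unfolding Dec_def
proof (intro exI[of _ "\<lambda>t. if t = (1,2,3,4) then (0) else if t = (1,3,2,4) then (-1/4) else (1/4)"] allI impI)
  fix vs :: "nat \<Rightarrow> real^4" assume H: "\<forall>j<2. vs j \<in> tangentV"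
  have h: "vs j $ 4 = - (vs j $ 1 + vs j $ 2 + vs j $ 3)" if "j < 2" for j using H that tan4 by blast
  show "wedge_dl 2 (\<lambda>i. if i = 0 then 4 else if i = 1 then 3 else c) vs = (\<Sum>t\<in>J 2. (\<lambda>t. if t = (1,2,3,4) then (0) else if t = (1,3,2,4) then (-1/4) else (1/4)) t * Om 2 t vs)"
    unfolding wedge2 by (simp add: J_def OmAll h algebra_simps)
qed

lemma Dec2_44: "Dec 2 4 4 c"
  unfolding Dec_def
proof (intro exI[of _ "\<lambda>t. if t = (1,2,3,4) then (0) else if t = (1,3,2,4) then (0) else (0)"] allI impI)
  fix vs :: "nat \<Rightarrow> real^4" assume H: "\<forall>j<2. vs j \<in> tangentV"
  have h: "vs j $ 4 = - (vs j $ 1 + vs j $ 2 + vs j $ 3)" if "j < 2" for j using H that tan4 by blast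
  show "wedge_dl 2 (\<lambda>i. if i = 0 then 4 else if i = 1 then 4 else c) vs = (\<Sum>t\<in>J 2. (\<lambda>t. if t = (1,2,3,4) then (0) else if t = (1,3,2,4) then (0) else (0)) t * Om 2 t vs)"
    unfolding wedge2 by (simp add: J_def OmAll h algebra_simps)
qed

lemma Dec3_111: "Dec 3 1 1 1"
  unfolding Dec_def
proof (intro exI[of _ "\<lambda>t. (0)"] allI impI)
  fix vs :: "nat \<Rightarrow> real^4" assume H: "\<forall>j<3. vs j \<in> tangentV"
  have h: "vs j $ 4 = - (vs j $ 1 + vs j $ 2 + vs j $ 3)" if "j < 3" for j using H that tan4 by blast
  show "wedge_dl 3 (\<lambda>i. if i = 0 then 1 else if i = 1 then 1 else 1) vs = (\<Sum>t\<in>J 3. (\<lambda>t. (0)) t * Om 3 t vs)"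
    unfolding wedge3 by (simp add: J_def OmAll h algebra_simps)
qed

lemma Dec3_112: "Dec 3 1 1 2"
  unfolding Dec_def
proof (intro exI[of _ "\<lambda>t. (0)"] allI impI)
  fix vs :: "nat \<Rightarrow> real^4" assume H: "\<forall>j<3. vs j \<in> tangentV"
  have h: "vs j $ 4 = - (vs j $ 1 + vs j $ 2 + vs j $ 3)" if "j < 3" for j using H that tan4 by blast
  show "wedge_dl 3 (\<lambda>i. if i = 0 then 1 else if i = 1 then 1 else 2) vs = (\<Sum>t\<in>J 3. (\<lambda>t. (0)) t * Om 3 t vs)"
    unfolding wedge3 by (simp add: J_def OmAll h algebra_simps)
qed

lemma Dec3_113: "Dec 3 1 1 3"
  unfolding Dec_def
proof (intro exI[of _ "\<lambda>t. (0)"] allI impI)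
  fix vs :: "nat \<Rightarrow> real^4" assume H: "\<forall>j<3. vs j \<in> tangentV"
  have h: "vs j $ 4 = - (vs j $ 1 + vs j $ 2 + vs j $ 3)" if "j < 3" for j using H that tan4 by blast
  show "wedge_dl 3 (\<lambda>i. if i = 0 then 1 else if i = 1 then 1 else 3) vs = (\<Sum>t\<in>J 3. (\<lambda>t. (0)) t * Om 3 t vs)"
    unfolding wedge3 by (simp add: J_def OmAll h algebra_simps)
qed

lemma Dec3_114: "Dec 3 1 1 4"
  unfolding Dec_def
proof (intro exI[of _ "\<lambda>t. (0)"] allI impI)
  fix vs :: "nat \<Rightarrow> real^4" assume H: "\<forall>j<3. vs j \<in> tangentV"
  have h: "vs j $ 4 = - (vs j $ 1 + vs j $ 2 + vs j $ 3)" if "j < 3" for j using H that tan4 by blast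
  show "wedge_dl 3 (\<lambda>i. if i = 0 then 1 else if i = 1 then 1 else 4) vs = (\<Sum>t\<in>J 3. (\<lambda>t. (0)) t * Om 3 t vs)"
    unfolding wedge3 by (simp add: J_def OmAll h algebra_simps)
qed

lemma Dec3_121: "Dec 3 1 2 1"
  unfolding Dec_def
proof (intro exI[of _ "\<lambda>t. (0)"] allI impI)
  fix vs :: "nat \<Rightarrow> real^4" assume H: "\<forall>j<3. vs j \<in> tangentV"
  have h: "vs j $ 4 = - (vs j $ 1 + vs j $ 2 + vs j $ 3)" if "j < 3" for j using H that tan4 by blast
  show "wedge_dl 3 (\<lambda>i. if i = 0 then 1 else if i = 1 then 2 else 1) vs = (\<Sum>t\<in>J 3. (\<lambda>t. (0)) t * Om 3 t vs)"
    unfolding wedge3 by (simp add: J_def OmAll h algebra_simps)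
qed

lemma Dec3_122: "Dec 3 1 2 2"
  unfolding Dec_def
proof (intro exI[of _ "\<lambda>t. (0)"] allI impI)
  fix vs :: "nat \<Rightarrow> real^4" assume H: "\<forall>j<3. vs j \<in> tangentV"
  have h: "vs j $ 4 = - (vs j $ 1 + vs j $ 2 + vs j $ 3)" if "j < 3" for j using H that tan4 by blast
  show "wedge_dl 3 (\<lambda>i. if i = 0 then 1 else if i = 1 then 2 else 2) vs = (\<Sum>t\<in>J 3. (\<lambda>t. (0)) t * Om 3 t vs)"
    unfolding wedge3 by (simp add: J_def OmAll h algebra_simps)
qed

lemma Dec3_123: "Dec 3 1 2 3"
  unfolding Dec_def
proof (intro exI[of _ "\<lambda>t. (1/4)"] allI impI)
  fix vs :: "nat \<Rightarrow> real^4" assume H: "\<forall>j<3. vs j \<in> tangentV"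
  have h: "vs j $ 4 = - (vs j $ 1 + vs j $ 2 + vs j $ 3)" if "j < 3" for j using H that tan4 by blast
  show "wedge_dl 3 (\<lambda>i. if i = 0 then 1 else if i = 1 then 2 else 3) vs = (\<Sum>t\<in>J 3. (\<lambda>t. (1/4)) t * Om 3 t vs)"
    unfolding wedge3 by (simp add: J_def OmAll h algebra_simps)
qed

lemma Dec3_124: "Dec 3 1 2 4"
  unfolding Dec_def
proof (intro exI[of _ "\<lambda>t. (-1/4)"] allI impI)
  fix vs :: "nat \<Rightarrow> real^4" assume H: "\<forall>j<3. vs j \<in> tangentV"
  have h: "vs j $ 4 = - (vs j $ 1 + vs j $ 2 + vs j $ 3)" if "j < 3" for j using H that tan4 by blast
  show "wedge_dl 3 (\<lambda>i. if i = 0 then 1 else if i = 1 then 2 else 4) vs = (\<Sum>t\<in>J 3. (\<lambda>t. (-1/4)) t * Om 3 t vs)"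
    unfolding wedge3 by (simp add: J_def OmAll h algebra_simps)
qed

lemma Dec3_131: "Dec 3 1 3 1"
  unfolding Dec_def
proof (intro exI[of _ "\<lambda>t. (0)"] allI impI)
  fix vs :: "nat \<Rightarrow> real^4" assume H: "\<forall>j<3. vs j \<in> tangentV"
  have h: "vs j $ 4 = - (vs j $ 1 + vs j $ 2 + vs j $ 3)" if "j < 3" for j using H that tan4 by blast
  show "wedge_dl 3 (\<lambda>i. if i = 0 then 1 else if i = 1 then 3 else 1) vs = (\<Sum>t\<in>J 3. (\<lambda>t. (0)) t * Om 3 t vs)"
    unfolding wedge3 by (simp add: J_def OmAll h algebra_simps)
qed

lemma Dec3_132: "Dec 3 1 3 2"
  unfolding Dec_def
proof (intro exI[of _ "\<lambda>t. (-1/4)"] allI impI)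
  fix vs :: "nat \<Rightarrow> real^4" assume H: "\<forall>j<3. vs j \<in> tangentV"
  have h: "vs j $ 4 = - (vs j $ 1 + vs j $ 2 + vs j $ 3)" if "j < 3" for j using H that tan4 by blast
  show "wedge_dl 3 (\<lambda>i. if i = 0 then 1 else if i = 1 then 3 else 2) vs = (\<Sum>t\<in>J 3. (\<lambda>t. (-1/4)) t * Om 3 t vs)"
    unfolding wedge3 by (simp add: J_def OmAll h algebra_simps)
qed

lemma Dec3_133: "Dec 3 1 3 3"
  unfolding Dec_def
proof (intro exI[of _ "\<lambda>t. (0)"] allI impI)
  fix vs :: "nat \<Rightarrow> real^4" assume H: "\<forall>j<3. vs j \<in> tangentV"
  have h: "vs j $ 4 = - (vs j $ 1 + vs j $ 2 + vs j $ 3)" if "j < 3" for j using H that tan4 by blast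
  show "wedge_dl 3 (\<lambda>i. if i = 0 then 1 else if i = 1 then 3 else 3) vs = (\<Sum>t\<in>J 3. (\<lambda>t. (0)) t * Om 3 t vs)"
    unfolding wedge3 by (simp add: J_def OmAll h algebra_simps)
qed

lemma Dec3_134: "Dec 3 1 3 4"
  unfolding Dec_def
proof (intro exI[of _ "\<lambda>t. (1/4)"] allI impI)
  fix vs :: "nat \<Rightarrow> real^4" assume H: "\<forall>j<3. vs j \<in> tangentV"
  have h: "vs j $ 4 = - (vs j $ 1 + vs j $ 2 + vs j $ 3)" if "j < 3" for j using H that tan4 by blast
  show "wedge_dl 3 (\<lambda>i. if i = 0 then 1 else if i = 1 then 3 else 4) vs = (\<Sum>t\<in>J 3. (\<lambda>t. (1/4)) t * Om 3 t vs)"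
    unfolding wedge3 by (simp add: J_def OmAll h algebra_simps)
qed

lemma Dec3_141: "Dec 3 1 4 1"
  unfolding Dec_def
proof (intro exI[of _ "\<lambda>t. (0)"] allI impI)
  fix vs :: "nat \<Rightarrow> real^4" assume H: "\<forall>j<3. vs j \<in> tangentV"
  have h: "vs j $ 4 = - (vs j $ 1 + vs j $ 2 + vs j $ 3)" if "j < 3" for j using H that tan4 by blast
  show "wedge_dl 3 (\<lambda>i. if i = 0 then 1 else if i = 1 then 4 else 1) vs = (\<Sum>t\<in>J 3. (\<lambda>t. (0)) t * Om 3 t vs)"
    unfolding wedge3 by (simp add: J_def OmAll h algebra_simps)
qed

lemma Dec3_142: "Dec 3 1 4 2"
  unfolding Dec_def
proof (intro exI[of _ "\<lambda>t. (1/4)"] allI impI)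
  fix vs :: "nat \<Rightarrow> real^4" assume H: "\<forall>j<3. vs j \<in> tangentV"
  have h: "vs j $ 4 = - (vs j $ 1 + vs j $ 2 + vs j $ 3)" if "j < 3" for j using H that tan4 by blast
  show "wedge_dl 3 (\<lambda>i. if i = 0 then 1 else if i = 1 then 4 else 2) vs = (\<Sum>t\<in>J 3. (\<lambda>t. (1/4)) t * Om 3 t vs)"
    unfolding wedge3 by (simp add: J_def OmAll h algebra_simps)
qed

lemma Dec3_143: "Dec 3 1 4 3"
  unfolding Dec_def
proof (intro exI[of _ "\<lambda>t. (-1/4)"] allI impI)
  fix vs :: "nat \<Rightarrow> real^4" assume H: "\<forall>j<3. vs j \<in> tangentV"
  have h: "vs j $ 4 = - (vs j $ 1 + vs j $ 2 + vs j $ 3)" if "j < 3" for j using H that tan4 by blast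
  show "wedge_dl 3 (\<lambda>i. if i = 0 then 1 else if i = 1 then 4 else 3) vs = (\<Sum>t\<in>J 3. (\<lambda>t. (-1/4)) t * Om 3 t vs)"
    unfolding wedge3 by (simp add: J_def OmAll h algebra_simps)
qed

lemma Dec3_144: "Dec 3 1 4 4"
  unfolding Dec_def
proof (intro exI[of _ "\<lambda>t. (0)"] allI impI)
  fix vs :: "nat \<Rightarrow> real^4" assume H: "\<forall>j<3. vs j \<in> tangentV"
  have h: "vs j $ 4 = - (vs j $ 1 + vs j $ 2 + vs j $ 3)" if "j < 3" for j using H that tan4 by blast
  show "wedge_dl 3 (\<lambda>i. if i = 0 then 1 else if i = 1 then 4 else 4) vs = (\<Sum>t\<in>J 3. (\<lambda>t. (0)) t * Om 3 t vs)"
    unfolding wedge3 by (simp add: J_def OmAll h algebra_simps)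
qed

lemma Dec3_211: "Dec 3 2 1 1"
  unfolding Dec_def
proof (intro exI[of _ "\<lambda>t. (0)"] allI impI)
  fix vs :: "nat \<Rightarrow> real^4" assume H: "\<forall>j<3. vs j \<in> tangentV"
  have h: "vs j $ 4 = - (vs j $ 1 + vs j $ 2 + vs j $ 3)" if "j < 3" for j using H that tan4 by blast
  show "wedge_dl 3 (\<lambda>i. if i = 0 then 2 else if i = 1 then 1 else 1) vs = (\<Sum>t\<in>J 3. (\<lambda>t. (0)) t * Om 3 t vs)"
    unfolding wedge3 by (simp add: J_def OmAll h algebra_simps)
qed

lemma Dec3_212: "Dec 3 2 1 2"
  unfolding Dec_def
proof (intro exI[of _ "\<lambda>t. (0)"] allI impI)
  fix vs :: "nat \<Rightarrow> real^4" assume H: "\<forall>j<3. vs j \<in> tangentV"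
  have h: "vs j $ 4 = - (vs j $ 1 + vs j $ 2 + vs j $ 3)" if "j < 3" for j using H that tan4 by blast
  show "wedge_dl 3 (\<lambda>i. if i = 0 then 2 else if i = 1 then 1 else 2) vs = (\<Sum>t\<in>J 3. (\<lambda>t. (0)) t * Om 3 t vs)"
    unfolding wedge3 by (simp add: J_def OmAll h algebra_simps)
qed

lemma Dec3_213: "Dec 3 2 1 3"
  unfolding Dec_def
proof (intro exI[of _ "\<lambda>t. (-1/4)"] allI impI)
  fix vs :: "nat \<Rightarrow> real^4" assume H: "\<forall>j<3. vs j \<in> tangentV"
  have h: "vs j $ 4 = - (vs j $ 1 + vs j $ 2 + vs j $ 3)" if "j < 3" for j using H that tan4 by blast
  show "wedge_dl 3 (\<lambda>i. if i = 0 then 2 else if i = 1 then 1 else 3) vs = (\<Sum>t\<in>J 3. (\<lambda>t. (-1/4)) t * Om 3 t vs)"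
    unfolding wedge3 by (simp add: J_def OmAll h algebra_simps)
qed

lemma Dec3_214: "Dec 3 2 1 4"
  unfolding Dec_def
proof (intro exI[of _ "\<lambda>t. (1/4)"] allI impI)
  fix vs :: "nat \<Rightarrow> real^4" assume H: "\<forall>j<3. vs j \<in> tangentV"
  have h: "vs j $ 4 = - (vs j $ 1 + vs j $ 2 + vs j $ 3)" if "j < 3" for j using H that tan4 by blast
  show "wedge_dl 3 (\<lambda>i. if i = 0 then 2 else if i = 1 then 1 else 4) vs = (\<Sum>t\<in>J 3. (\<lambda>t. (1/4)) t * Om 3 t vs)"
    unfolding wedge3 by (simp add: J_def OmAll h algebra_simps)
qed

lemma Dec3_221: "Dec 3 2 2 1"
  unfolding Dec_def
proof (intro exI[of _ "\<lambda>t. (0)"] allI impI)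
  fix vs :: "nat \<Rightarrow> real^4" assume H: "\<forall>j<3. vs j \<in> tangentV"
  have h: "vs j $ 4 = - (vs j $ 1 + vs j $ 2 + vs j $ 3)" if "j < 3" for j using H that tan4 by blast
  show "wedge_dl 3 (\<lambda>i. if i = 0 then 2 else if i = 1 then 2 else 1) vs = (\<Sum>t\<in>J 3. (\<lambda>t. (0)) t * Om 3 t vs)"
    unfolding wedge3 by (simp add: J_def OmAll h algebra_simps)
qed

lemma Dec3_222: "Dec 3 2 2 2"
  unfolding Dec_def
proof (intro exI[of _ "\<lambda>t. (0)"] allI impI)
  fix vs :: "nat \<Rightarrow> real^4" assume H: "\<forall>j<3. vs j \<in> tangentV"
  have h: "vs j $ 4 = - (vs j $ 1 + vs j $ 2 + vs j $ 3)" if "j < 3" for j using H that tan4 by blast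
  show "wedge_dl 3 (\<lambda>i. if i = 0 then 2 else if i = 1 then 2 else 2) vs = (\<Sum>t\<in>J 3. (\<lambda>t. (0)) t * Om 3 t vs)"
    unfolding wedge3 by (simp add: J_def OmAll h algebra_simps)
qed

lemma Dec3_223: "Dec 3 2 2 3"
  unfolding Dec_def
proof (intro exI[of _ "\<lambda>t. (0)"] allI impI)
  fix vs :: "nat \<Rightarrow> real^4" assume H: "\<forall>j<3. vs j \<in> tangentV"
  have h: "vs j $ 4 = - (vs j $ 1 + vs j $ 2 + vs j $ 3)" if "j < 3" for j using H that tan4 by blast
  show "wedge_dl 3 (\<lambda>i. if i = 0 then 2 else if i = 1 then 2 else 3) vs = (\<Sum>t\<in>J 3. (\<lambda>t. (0)) t * Om 3 t vs)"
    unfolding wedge3 by (simp add: J_def OmAll h algebra_simps)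
qed

lemma Dec3_224: "Dec 3 2 2 4"
  unfolding Dec_def
proof (intro exI[of _ "\<lambda>t. (0)"] allI impI)
  fix vs :: "nat \<Rightarrow> real^4" assume H: "\<forall>j<3. vs j \<in> tangentV"
  have h: "vs j $ 4 = - (vs j $ 1 + vs j $ 2 + vs j $ 3)" if "j < 3" for j using H that tan4 by blast
  show "wedge_dl 3 (\<lambda>i. if i = 0 then 2 else if i = 1 then 2 else 4) vs = (\<Sum>t\<in>J 3. (\<lambda>t. (0)) t * Om 3 t vs)"
    unfolding wedge3 by (simp add: J_def OmAll h algebra_simps)
qed

lemma Dec3_231: "Dec 3 2 3 1"
  unfolding Dec_def
proof (intro exI[of _ "\<lambda>t. (1/4)"] allI impI)
  fix vs :: "nat \<Rightarrow> real^4" assume H: "\<forall>j<3. vs j \<in> tangentV"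
  have h: "vs j $ 4 = - (vs j $ 1 + vs j $ 2 + vs j $ 3)" if "j < 3" for j using H that tan4 by blast
  show "wedge_dl 3 (\<lambda>i. if i = 0 then 2 else if i = 1 then 3 else 1) vs = (\<Sum>t\<in>J 3. (\<lambda>t. (1/4)) t * Om 3 t vs)"
    unfolding wedge3 by (simp add: J_def OmAll h algebra_simps)
qed

lemma Dec3_232: "Dec 3 2 3 2"
  unfolding Dec_def
proof (intro exI[of _ "\<lambda>t. (0)"] allI impI)
  fix vs :: "nat \<Rightarrow> real^4" assume H: "\<forall>j<3. vs j \<in> tangentV"
  have h: "vs j $ 4 = - (vs j $ 1 + vs j $ 2 + vs j $ 3)" if "j < 3" for j using H that tan4 by blast
  show "wedge_dl 3 (\<lambda>i. if i = 0 then 2 else if i = 1 then 3 else 2) vs = (\<Sum>t\<in>J 3. (\<lambda>t. (0)) t * Om 3 t vs)"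
    unfolding wedge3 by (simp add: J_def OmAll h algebra_simps)
qed

lemma Dec3_233: "Dec 3 2 3 3"
  unfolding Dec_def
proof (intro exI[of _ "\<lambda>t. (0)"] allI impI)
  fix vs :: "nat \<Rightarrow> real^4" assume H: "\<forall>j<3. vs j \<in> tangentV"
  have h: "vs j $ 4 = - (vs j $ 1 + vs j $ 2 + vs j $ 3)" if "j < 3" for j using H that tan4 by blast
  show "wedge_dl 3 (\<lambda>i. if i = 0 then 2 else if i = 1 then 3 else 3) vs = (\<Sum>t\<in>J 3. (\<lambda>t. (0)) t * Om 3 t vs)"
    unfolding wedge3 by (simp add: J_def OmAll h algebra_simps)
qed

lemma Dec3_234: "Dec 3 2 3 4"
  unfolding Dec_def
proof (intro exI[of _ "\<lambda>t. (-1/4)"] allI impI)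
  fix vs :: "nat \<Rightarrow> real^4" assume H: "\<forall>j<3. vs j \<in> tangentV"
  have h: "vs j $ 4 = - (vs j $ 1 + vs j $ 2 + vs j $ 3)" if "j < 3" for j using H that tan4 by blast
  show "wedge_dl 3 (\<lambda>i. if i = 0 then 2 else if i = 1 then 3 else 4) vs = (\<Sum>t\<in>J 3. (\<lambda>t. (-1/4)) t * Om 3 t vs)"
    unfolding wedge3 by (simp add: J_def OmAll h algebra_simps)
qed

lemma Dec3_241: "Dec 3 2 4 1"
  unfolding Dec_def
proof (intro exI[of _ "\<lambda>t. (-1/4)"] allI impI)
  fix vs :: "nat \<Rightarrow> real^4" assume H: "\<forall>j<3. vs j \<in> tangentV"
  have h: "vs j $ 4 = - (vs j $ 1 + vs j $ 2 + vs j $ 3)" if "j < 3" for j using H that tan4 by blast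
  show "wedge_dl 3 (\<lambda>i. if i = 0 then 2 else if i = 1 then 4 else 1) vs = (\<Sum>t\<in>J 3. (\<lambda>t. (-1/4)) t * Om 3 t vs)"
    unfolding wedge3 by (simp add: J_def OmAll h algebra_simps)
qed

lemma Dec3_242: "Dec 3 2 4 2"
  unfolding Dec_def
proof (intro exI[of _ "\<lambda>t. (0)"] allI impI)
  fix vs :: "nat \<Rightarrow> real^4" assume H: "\<forall>j<3. vs j \<in> tangentV"
  have h: "vs j $ 4 = - (vs j $ 1 + vs j $ 2 + vs j $ 3)" if "j < 3" for j using H that tan4 by blast
  show "wedge_dl 3 (\<lambda>i. if i = 0 then 2 else if i = 1 then 4 else 2) vs = (\<Sum>t\<in>J 3. (\<lambda>t. (0)) t * Om 3 t vs)"
    unfolding wedge3 by (simp add: J_def OmAll h algebra_simps)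
qed

lemma Dec3_243: "Dec 3 2 4 3"
  unfolding Dec_def
proof (intro exI[of _ "\<lambda>t. (1/4)"] allI impI)
  fix vs :: "nat \<Rightarrow> real^4" assume H: "\<forall>j<3. vs j \<in> tangentV"
  have h: "vs j $ 4 = - (vs j $ 1 + vs j $ 2 + vs j $ 3)" if "j < 3" for j using H that tan4 by blast
  show "wedge_dl 3 (\<lambda>i. if i = 0 then 2 else if i = 1 then 4 else 3) vs = (\<Sum>t\<in>J 3. (\<lambda>t. (1/4)) t * Om 3 t vs)"
    unfolding wedge3 by (simp add: J_def OmAll h algebra_simps)
qed

lemma Dec3_244: "Dec 3 2 4 4"
  unfolding Dec_def
proof (intro exI[of _ "\<lambda>t. (0)"] allI impI)
  fix vs :: "nat \<Rightarrow> real^4" assume H: "\<forall>j<3. vs j \<in> tangentV"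
  have h: "vs j $ 4 = - (vs j $ 1 + vs j $ 2 + vs j $ 3)" if "j < 3" for j using H that tan4 by blast
  show "wedge_dl 3 (\<lambda>i. if i = 0 then 2 else if i = 1 then 4 else 4) vs = (\<Sum>t\<in>J 3. (\<lambda>t. (0)) t * Om 3 t vs)"
    unfolding wedge3 by (simp add: J_def OmAll h algebra_simps)
qed

lemma Dec3_311: "Dec 3 3 1 1"
  unfolding Dec_def
proof (intro exI[of _ "\<lambda>t. (0)"] allI impI)
  fix vs :: "nat \<Rightarrow> real^4" assume H: "\<forall>j<3. vs j \<in> tangentV"
  have h: "vs j $ 4 = - (vs j $ 1 + vs j $ 2 + vs j $ 3)" if "j < 3" for j using H that tan4 by blast
  show "wedge_dl 3 (\<lambda>i. if i = 0 then 3 else if i = 1 then 1 else 1) vs = (\<Sum>t\<in>J 3. (\<lambda>t. (0)) t * Om 3 t vs)"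
    unfolding wedge3 by (simp add: J_def OmAll h algebra_simps)
qed

lemma Dec3_312: "Dec 3 3 1 2"
  unfolding Dec_def
proof (intro exI[of _ "\<lambda>t. (1/4)"] allI impI)
  fix vs :: "nat \<Rightarrow> real^4" assume H: "\<forall>j<3. vs j \<in> tangentV"
  have h: "vs j $ 4 = - (vs j $ 1 + vs j $ 2 + vs j $ 3)" if "j < 3" for j using H that tan4 by blast
  show "wedge_dl 3 (\<lambda>i. if i = 0 then 3 else if i = 1 then 1 else 2) vs = (\<Sum>t\<in>J 3. (\<lambda>t. (1/4)) t * Om 3 t vs)"
    unfolding wedge3 by (simp add: J_def OmAll h algebra_simps)
qed

lemma Dec3_313: "Dec 3 3 1 3"
  unfolding Dec_def
proof (intro exI[of _ "\<lambda>t. (0)"] allI impI)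
  fix vs :: "nat \<Rightarrow> real^4" assume H: "\<forall>j<3. vs j \<in> tangentV"
  have h: "vs j $ 4 = - (vs j $ 1 + vs j $ 2 + vs j $ 3)" if "j < 3" for j using H that tan4 by blast
  show "wedge_dl 3 (\<lambda>i. if i = 0 then 3 else if i = 1 then 1 else 3) vs = (\<Sum>t\<in>J 3. (\<lambda>t. (0)) t * Om 3 t vs)"
    unfolding wedge3 by (simp add: J_def OmAll h algebra_simps)
qed

lemma Dec3_314: "Dec 3 3 1 4"
  unfolding Dec_def
proof (intro exI[of _ "\<lambda>t. (-1/4)"] allI impI)
  fix vs :: "nat \<Rightarrow> real^4" assume H: "\<forall>j<3. vs j \<in> tangentV"
  have h: "vs j $ 4 = - (vs j $ 1 + vs j $ 2 + vs j $ 3)" if "j < 3" for j using H that tan4 by blast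
  show "wedge_dl 3 (\<lambda>i. if i = 0 then 3 else if i = 1 then 1 else 4) vs = (\<Sum>t\<in>J 3. (\<lambda>t. (-1/4)) t * Om 3 t vs)"
    unfolding wedge3 by (simp add: J_def OmAll h algebra_simps)
qed

lemma Dec3_321: "Dec 3 3 2 1"
  unfolding Dec_def
proof (intro exI[of _ "\<lambda>t. (-1/4)"] allI impI)
  fix vs :: "nat \<Rightarrow> real^4" assume H: "\<forall>j<3. vs j \<in> tangentV"
  have h: "vs j $ 4 = - (vs j $ 1 + vs j $ 2 + vs j $ 3)" if "j < 3" for j using H that tan4 by blast
  show "wedge_dl 3 (\<lambda>i. if i = 0 then 3 else if i = 1 then 2 else 1) vs = (\<Sum>t\<in>J 3. (\<lambda>t. (-1/4)) t * Om 3 t vs)"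
    unfolding wedge3 by (simp add: J_def OmAll h algebra_simps)
qed

lemma Dec3_322: "Dec 3 3 2 2"
  unfolding Dec_def
proof (intro exI[of _ "\<lambda>t. (0)"] allI impI)
  fix vs :: "nat \<Rightarrow> real^4" assume H: "\<forall>j<3. vs j \<in> tangentV"
  have h: "vs j $ 4 = - (vs j $ 1 + vs j $ 2 + vs j $ 3)" if "j < 3" for j using H that tan4 by blast
  show "wedge_dl 3 (\<lambda>i. if i = 0 then 3 else if i = 1 then 2 else 2) vs = (\<Sum>t\<in>J 3. (\<lambda>t. (0)) t * Om 3 t vs)"
    unfolding wedge3 by (simp add: J_def OmAll h algebra_simps)
qed

lemma Dec3_323: "Dec 3 3 2 3"
  unfolding Dec_def
proof (intro exI[of _ "\<lambda>t. (0)"] allI impI)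
  fix vs :: "nat \<Rightarrow> real^4" assume H: "\<forall>j<3. vs j \<in> tangentV"
  have h: "vs j $ 4 = - (vs j $ 1 + vs j $ 2 + vs j $ 3)" if "j < 3" for j using H that tan4 by blast
  show "wedge_dl 3 (\<lambda>i. if i = 0 then 3 else if i = 1 then 2 else 3) vs = (\<Sum>t\<in>J 3. (\<lambda>t. (0)) t * Om 3 t vs)"
    unfolding wedge3 by (simp add: J_def OmAll h algebra_simps)
qed

lemma Dec3_324: "Dec 3 3 2 4"
  unfolding Dec_def
proof (intro exI[of _ "\<lambda>t. (1/4)"] allI impI)
  fix vs :: "nat \<Rightarrow> real^4" assume H: "\<forall>j<3. vs j \<in> tangentV"
  have h: "vs j $ 4 = - (vs j $ 1 + vs j $ 2 + vs j $ 3)" if "j < 3" for j using H that tan4 by blast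
  show "wedge_dl 3 (\<lambda>i. if i = 0 then 3 else if i = 1 then 2 else 4) vs = (\<Sum>t\<in>J 3. (\<lambda>t. (1/4)) t * Om 3 t vs)"
    unfolding wedge3 by (simp add: J_def OmAll h algebra_simps)
qed

lemma Dec3_331: "Dec 3 3 3 1"
  unfolding Dec_def
proof (intro exI[of _ "\<lambda>t. (0)"] allI impI)
  fix vs :: "nat \<Rightarrow> real^4" assume H: "\<forall>j<3. vs j \<in> tangentV"
  have h: "vs j $ 4 = - (vs j $ 1 + vs j $ 2 + vs j $ 3)" if "j < 3" for j using H that tan4 by blast
  show "wedge_dl 3 (\<lambda>i. if i = 0 then 3 else if i = 1 then 3 else 1) vs = (\<Sum>t\<in>J 3. (\<lambda>t. (0)) t * Om 3 t vs)"
    unfolding wedge3 by (simp add: J_def OmAll h algebra_simps)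
qed

lemma Dec3_332: "Dec 3 3 3 2"
  unfolding Dec_def
proof (intro exI[of _ "\<lambda>t. (0)"] allI impI)
  fix vs :: "nat \<Rightarrow> real^4" assume H: "\<forall>j<3. vs j \<in> tangentV"
  have h: "vs j $ 4 = - (vs j $ 1 + vs j $ 2 + vs j $ 3)" if "j < 3" for j using H that tan4 by blast
  show "wedge_dl 3 (\<lambda>i. if i = 0 then 3 else if i = 1 then 3 else 2) vs = (\<Sum>t\<in>J 3. (\<lambda>t. (0)) t * Om 3 t vs)"
    unfolding wedge3 by (simp add: J_def OmAll h algebra_simps)
qed

lemma Dec3_333: "Dec 3 3 3 3"
  unfolding Dec_def
proof (intro exI[of _ "\<lambda>t. (0)"] allI impI)
  fix vs :: "nat \<Rightarrow> real^4" assume H: "\<forall>j<3. vs j \<in> tangentV"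
  have h: "vs j $ 4 = - (vs j $ 1 + vs j $ 2 + vs j $ 3)" if "j < 3" for j using H that tan4 by blast
  show "wedge_dl 3 (\<lambda>i. if i = 0 then 3 else if i = 1 then 3 else 3) vs = (\<Sum>t\<in>J 3. (\<lambda>t. (0)) t * Om 3 t vs)"
    unfolding wedge3 by (simp add: J_def OmAll h algebra_simps)
qed

lemma Dec3_334: "Dec 3 3 3 4"
  unfolding Dec_def
proof (intro exI[of _ "\<lambda>t. (0)"] allI impI)
  fix vs :: "nat \<Rightarrow> real^4" assume H: "\<forall>j<3. vs j \<in> tangentV"
  have h: "vs j $ 4 = - (vs j $ 1 + vs j $ 2 + vs j $ 3)" if "j < 3" for j using H that tan4 by blast
  show "wedge_dl 3 (\<lambda>i. if i = 0 then 3 else if i = 1 then 3 else 4) vs = (\<Sum>t\<in>J 3. (\<lambda>t. (0)) t * Om 3 t vs)"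
    unfolding wedge3 by (simp add: J_def OmAll h algebra_simps)
qed

lemma Dec3_341: "Dec 3 3 4 1"
  unfolding Dec_def
proof (intro exI[of _ "\<lambda>t. (1/4)"] allI impI)
  fix vs :: "nat \<Rightarrow> real^4" assume H: "\<forall>j<3. vs j \<in> tangentV"
  have h: "vs j $ 4 = - (vs j $ 1 + vs j $ 2 + vs j $ 3)" if "j < 3" for j using H that tan4 by blast
  show "wedge_dl 3 (\<lambda>i. if i = 0 then 3 else if i = 1 then 4 else 1) vs = (\<Sum>t\<in>J 3. (\<lambda>t. (1/4)) t * Om 3 t vs)"
    unfolding wedge3 by (simp add: J_def OmAll h algebra_simps)
qed

lemma Dec3_342: "Dec 3 3 4 2"
  unfolding Dec_def
proof (intro exI[of _ "\<lambda>t. (-1/4)"] allI impI)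
  fix vs :: "nat \<Rightarrow> real^4" assume H: "\<forall>j<3. vs j \<in> tangentV"
  have h: "vs j $ 4 = - (vs j $ 1 + vs j $ 2 + vs j $ 3)" if "j < 3" for j using H that tan4 by blast
  show "wedge_dl 3 (\<lambda>i. if i = 0 then 3 else if i = 1 then 4 else 2) vs = (\<Sum>t\<in>J 3. (\<lambda>t. (-1/4)) t * Om 3 t vs)"
    unfolding wedge3 by (simp add: J_def OmAll h algebra_simps)
qed

lemma Dec3_343: "Dec 3 3 4 3"
  unfolding Dec_def
proof (intro exI[of _ "\<lambda>t. (0)"] allI impI)
  fix vs :: "nat \<Rightarrow> real^4" assume H: "\<forall>j<3. vs j \<in> tangentV"
  have h: "vs j $ 4 = - (vs j $ 1 + vs j $ 2 + vs j $ 3)" if "j < 3" for j using H that tan4 by blast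
  show "wedge_dl 3 (\<lambda>i. if i = 0 then 3 else if i = 1 then 4 else 3) vs = (\<Sum>t\<in>J 3. (\<lambda>t. (0)) t * Om 3 t vs)"
    unfolding wedge3 by (simp add: J_def OmAll h algebra_simps)
qed

lemma Dec3_344: "Dec 3 3 4 4"
  unfolding Dec_def
proof (intro exI[of _ "\<lambda>t. (0)"] allI impI)
  fix vs :: "nat \<Rightarrow> real^4" assume H: "\<forall>j<3. vs j \<in> tangentV"
  have h: "vs j $ 4 = - (vs j $ 1 + vs j $ 2 + vs j $ 3)" if "j < 3" for j using H that tan4 by blast
  show "wedge_dl 3 (\<lambda>i. if i = 0 then 3 else if i = 1 then 4 else 4) vs = (\<Sum>t\<in>J 3. (\<lambda>t. (0)) t * Om 3 t vs)"
    unfolding wedge3 by (simp add: J_def OmAll h algebra_simps)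
qed

lemma Dec3_411: "Dec 3 4 1 1"
  unfolding Dec_def
proof (intro exI[of _ "\<lambda>t. (0)"] allI impI)
  fix vs :: "nat \<Rightarrow> real^4" assume H: "\<forall>j<3. vs j \<in> tangentV"
  have h: "vs j $ 4 = - (vs j $ 1 + vs j $ 2 + vs j $ 3)" if "j < 3" for j using H that tan4 by blast
  show "wedge_dl 3 (\<lambda>i. if i = 0 then 4 else if i = 1 then 1 else 1) vs = (\<Sum>t\<in>J 3. (\<lambda>t. (0)) t * Om 3 t vs)"
    unfolding wedge3 by (simp add: J_def OmAll h algebra_simps)
qed

lemma Dec3_412: "Dec 3 4 1 2"
  unfolding Dec_def
proof (intro exI[of _ "\<lambda>t. (-1/4)"] allI impI)
  fix vs :: "nat \<Rightarrow> real^4" assume H: "\<forall>j<3. vs j \<in> tangentV"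
  have h: "vs j $ 4 = - (vs j $ 1 + vs j $ 2 + vs j $ 3)" if "j < 3" for j using H that tan4 by blast
  show "wedge_dl 3 (\<lambda>i. if i = 0 then 4 else if i = 1 then 1 else 2) vs = (\<Sum>t\<in>J 3. (\<lambda>t. (-1/4)) t * Om 3 t vs)"
    unfolding wedge3 by (simp add: J_def OmAll h algebra_simps)
qed

lemma Dec3_413: "Dec 3 4 1 3"
  unfolding Dec_def
proof (intro exI[of _ "\<lambda>t. (1/4)"] allI impI)
  fix vs :: "nat \<Rightarrow> real^4" assume H: "\<forall>j<3. vs j \<in> tangentV"
  have h: "vs j $ 4 = - (vs j $ 1 + vs j $ 2 + vs j $ 3)" if "j < 3" for j using H that tan4 by blast
  show "wedge_dl 3 (\<lambda>i. if i = 0 then 4 else if i = 1 then 1 else 3) vs = (\<Sum>t\<in>J 3. (\<lambda>t. (1/4)) t * Om 3 t vs)"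
    unfolding wedge3 by (simp add: J_def OmAll h algebra_simps)
qed

lemma Dec3_414: "Dec 3 4 1 4"
  unfolding Dec_def
proof (intro exI[of _ "\<lambda>t. (0)"] allI impI)
  fix vs :: "nat \<Rightarrow> real^4" assume H: "\<forall>j<3. vs j \<in> tangentV"
  have h: "vs j $ 4 = - (vs j $ 1 + vs j $ 2 + vs j $ 3)" if "j < 3" for j using H that tan4 by blast
  show "wedge_dl 3 (\<lambda>i. if i = 0 then 4 else if i = 1 then 1 else 4) vs = (\<Sum>t\<in>J 3. (\<lambda>t. (0)) t * Om 3 t vs)"
    unfolding wedge3 by (simp add: J_def OmAll h algebra_simps)
qed

lemma Dec3_421: "Dec 3 4 2 1"
  unfolding Dec_def
proof (intro exI[of _ "\<lambda>t. (1/4)"] allI impI)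
  fix vs :: "nat \<Rightarrow> real^4" assume H: "\<forall>j<3. vs j \<in> tangentV"
  have h: "vs j $ 4 = - (vs j $ 1 + vs j $ 2 + vs j $ 3)" if "j < 3" for j using H that tan4 by blast
  show "wedge_dl 3 (\<lambda>i. if i = 0 then 4 else if i = 1 then 2 else 1) vs = (\<Sum>t\<in>J 3. (\<lambda>t. (1/4)) t * Om 3 t vs)"
    unfolding wedge3 by (simp add: J_def OmAll h algebra_simps)
qed

lemma Dec3_422: "Dec 3 4 2 2"
  unfolding Dec_def
proof (intro exI[of _ "\<lambda>t. (0)"] allI impI)
  fix vs :: "nat \<Rightarrow> real^4" assume H: "\<forall>j<3. vs j \<in> tangentV"
  have h: "vs j $ 4 = - (vs j $ 1 + vs j $ 2 + vs j $ 3)" if "j < 3" for j using H that tan4 by blast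
  show "wedge_dl 3 (\<lambda>i. if i = 0 then 4 else if i = 1 then 2 else 2) vs = (\<Sum>t\<in>J 3. (\<lambda>t. (0)) t * Om 3 t vs)"
    unfolding wedge3 by (simp add: J_def OmAll h algebra_simps)
qed

lemma Dec3_423: "Dec 3 4 2 3"
  unfolding Dec_def
proof (intro exI[of _ "\<lambda>t. (-1/4)"] allI impI)
  fix vs :: "nat \<Rightarrow> real^4" assume H: "\<forall>j<3. vs j \<in> tangentV"
  have h: "vs j $ 4 = - (vs j $ 1 + vs j $ 2 + vs j $ 3)" if "j < 3" for j using H that tan4 by blast
  show "wedge_dl 3 (\<lambda>i. if i = 0 then 4 else if i = 1 then 2 else 3) vs = (\<Sum>t\<in>J 3. (\<lambda>t. (-1/4)) t * Om 3 t vs)"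
    unfolding wedge3 by (simp add: J_def OmAll h algebra_simps)
qed

lemma Dec3_424: "Dec 3 4 2 4"
  unfolding Dec_def
proof (intro exI[of _ "\<lambda>t. (0)"] allI impI)
  fix vs :: "nat \<Rightarrow> real^4" assume H: "\<forall>j<3. vs j \<in> tangentV"
  have h: "vs j $ 4 = - (vs j $ 1 + vs j $ 2 + vs j $ 3)" if "j < 3" for j using H that tan4 by blast
  show "wedge_dl 3 (\<lambda>i. if i = 0 then 4 else if i = 1 then 2 else 4) vs = (\<Sum>t\<in>J 3. (\<lambda>t. (0)) t * Om 3 t vs)"
    unfolding wedge3 by (simp add: J_def OmAll h algebra_simps)
qed

lemma Dec3_431: "Dec 3 4 3 1"
  unfolding Dec_def
proof (intro exI[of _ "\<lambda>t. (-1/4)"] allI impI)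
  fix vs :: "nat \<Rightarrow> real^4" assume H: "\<forall>j<3. vs j \<in> tangentV"
  have h: "vs j $ 4 = - (vs j $ 1 + vs j $ 2 + vs j $ 3)" if "j < 3" for j using H that tan4 by blast
  show "wedge_dl 3 (\<lambda>i. if i = 0 then 4 else if i = 1 then 3 else 1) vs = (\<Sum>t\<in>J 3. (\<lambda>t. (-1/4)) t * Om 3 t vs)"
    unfolding wedge3 by (simp add: J_def OmAll h algebra_simps)
qed

lemma Dec3_432: "Dec 3 4 3 2"
  unfolding Dec_def
proof (intro exI[of _ "\<lambda>t. (1/4)"] allI impI)
  fix vs :: "nat \<Rightarrow> real^4" assume H: "\<forall>j<3. vs j \<in> tangentV"
  have h: "vs j $ 4 = - (vs j $ 1 + vs j $ 2 + vs j $ 3)" if "j < 3" for j using H that tan4 by blast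
  show "wedge_dl 3 (\<lambda>i. if i = 0 then 4 else if i = 1 then 3 else 2) vs = (\<Sum>t\<in>J 3. (\<lambda>t. (1/4)) t * Om 3 t vs)"
    unfolding wedge3 by (simp add: J_def OmAll h algebra_simps)
qed

lemma Dec3_433: "Dec 3 4 3 3"
  unfolding Dec_def
proof (intro exI[of _ "\<lambda>t. (0)"] allI impI)
  fix vs :: "nat \<Rightarrow> real^4" assume H: "\<forall>j<3. vs j \<in> tangentV"
  have h: "vs j $ 4 = - (vs j $ 1 + vs j $ 2 + vs j $ 3)" if "j < 3" for j using H that tan4 by blast
  show "wedge_dl 3 (\<lambda>i. if i = 0 then 4 else if i = 1 then 3 else 3) vs = (\<Sum>t\<in>J 3. (\<lambda>t. (0)) t * Om 3 t vs)"
    unfolding wedge3 by (simp add: J_def OmAll h algebra_simps)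
qed

lemma Dec3_434: "Dec 3 4 3 4"
  unfolding Dec_def
proof (intro exI[of _ "\<lambda>t. (0)"] allI impI)
  fix vs :: "nat \<Rightarrow> real^4" assume H: "\<forall>j<3. vs j \<in> tangentV"
  have h: "vs j $ 4 = - (vs j $ 1 + vs j $ 2 + vs j $ 3)" if "j < 3" for j using H that tan4 by blast
  show "wedge_dl 3 (\<lambda>i. if i = 0 then 4 else if i = 1 then 3 else 4) vs = (\<Sum>t\<in>J 3. (\<lambda>t. (0)) t * Om 3 t vs)"
    unfolding wedge3 by (simp add: J_def OmAll h algebra_simps)
qed

lemma Dec3_441: "Dec 3 4 4 1"
  unfolding Dec_def
proof (intro exI[of _ "\<lambda>t. (0)"] allI impI)
  fix vs :: "nat \<Rightarrow> real^4" assume H: "\<forall>j<3. vs j \<in> tangentV"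
  have h: "vs j $ 4 = - (vs j $ 1 + vs j $ 2 + vs j $ 3)" if "j < 3" for j using H that tan4 by blast
  show "wedge_dl 3 (\<lambda>i. if i = 0 then 4 else if i = 1 then 4 else 1) vs = (\<Sum>t\<in>J 3. (\<lambda>t. (0)) t * Om 3 t vs)"
    unfolding wedge3 by (simp add: J_def OmAll h algebra_simps)
qed

lemma Dec3_442: "Dec 3 4 4 2"
  unfolding Dec_def
proof (intro exI[of _ "\<lambda>t. (0)"] allI impI)
  fix vs :: "nat \<Rightarrow> real^4" assume H: "\<forall>j<3. vs j \<in> tangentV"
  have h: "vs j $ 4 = - (vs j $ 1 + vs j $ 2 + vs j $ 3)" if "j < 3" for j using H that tan4 by blast
  show "wedge_dl 3 (\<lambda>i. if i = 0 then 4 else if i = 1 then 4 else 2) vs = (\<Sum>t\<in>J 3. (\<lambda>t. (0)) t * Om 3 t vs)"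
    unfolding wedge3 by (simp add: J_def OmAll h algebra_simps)
qed

lemma Dec3_443: "Dec 3 4 4 3"
  unfolding Dec_def
proof (intro exI[of _ "\<lambda>t. (0)"] allI impI)
  fix vs :: "nat \<Rightarrow> real^4" assume H: "\<forall>j<3. vs j \<in> tangentV"
  have h: "vs j $ 4 = - (vs j $ 1 + vs j $ 2 + vs j $ 3)" if "j < 3" for j using H that tan4 by blast
  show "wedge_dl 3 (\<lambda>i. if i = 0 then 4 else if i = 1 then 4 else 3) vs = (\<Sum>t\<in>J 3. (\<lambda>t. (0)) t * Om 3 t vs)"
    unfolding wedge3 by (simp add: J_def OmAll h algebra_simps)
qed

lemma Dec3_444: "Dec 3 4 4 4"
  unfolding Dec_def
proof (intro exI[of _ "\<lambda>t. (0)"] allI impI)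
  fix vs :: "nat \<Rightarrow> real^4" assume H: "\<forall>j<3. vs j \<in> tangentV"
  have h: "vs j $ 4 = - (vs j $ 1 + vs j $ 2 + vs j $ 3)" if "j < 3" for j using H that tan4 by blast
  show "wedge_dl 3 (\<lambda>i. if i = 0 then 4 else if i = 1 then 4 else 4) vs = (\<Sum>t\<in>J 3. (\<lambda>t. (0)) t * Om 3 t vs)"
    unfolding wedge3 by (simp add: J_def OmAll h algebra_simps)
qed

lemma dec1_all: "\<forall>a\<in>{1,2,3,4::4}. Dec 1 a b c"
  by (simp only: ball_simps insert_iff empty_iff simp_thms) (simp add: Dec1_1[simplified] Dec1_2[simplified] Dec1_3[simplified] Dec1_4[simplified])
lemma dec2_all: "\<forall>a\<in>{1,2,3,4::4}. \<forall>b\<in>{1,2,3,4::4}. Dec 2 a b c"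
  by (simp only: ball_simps insert_iff empty_iff simp_thms) (simp add: Dec2_11[simplified] Dec2_12[simplified] Dec2_13[simplified] Dec2_14[simplified] Dec2_21[simplified] Dec2_22[simplified] Dec2_23[simplified] Dec2_24[simplified] Dec2_31[simplified] Dec2_32[simplified] Dec2_33[simplified] Dec2_34[simplified] Dec2_41[simplified] Dec2_42[simplified] Dec2_43[simplified] Dec2_44[simplified])
lemma dec3_all: "\<forall>a\<in>{1,2,3,4::4}. \<forall>b\<in>{1,2,3,4::4}. \<forall>c\<in>{1,2,3,4::4}. Dec 3 a b c"
  by (simp only: ball_simps insert_iff empty_iff simp_thms) (simp add: Dec3_111[simplified] Dec3_112[simplified] Dec3_113[simplified] Dec3_114[simplified] Dec3_121[simplified] Dec3_122[simplified] Dec3_123[simplified] Dec3_124[simplified] Dec3_131[simplified] Dec3_132[simplified] Dec3_133[simplified] Dec3_134[simplified] Dec3_141[simplified] Dec3_142[simplified] Dec3_143[simplified] Dec3_144[simplified] Dec3_211[simplified] Dec3_212[simplified] Dec3_213[simplified] Dec3_214[simplified] Dec3_221[simplified] Dec3_222[simplified] Dec3_223[simplified] Dec3_224[simplified] Dec3_231[simplified] Dec3_232[simplified] Dec3_233[simplified] Dec3_234[simplified] Dec3_241[simplified] Dec3_242[simplified] Dec3_243[simplified] Dec3_244[simplified] Dec3_311[simplified] Dec3_312[simplified] Dec3_313[simplified] Dec3_314[simplified] Dec3_321[simplified] Dec3_322[simplified] Dec3_323[simplified] Dec3_324[simplified] Dec3_331[simplified] Dec3_332[simplified] Dec3_333[simplified]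 Dec3_334[simplified] Dec3_341[simplified] Dec3_342[simplified] Dec3_343[simplified] Dec3_344[simplified] Dec3_411[simplified] Dec3_412[simplified] Dec3_413[simplified] Dec3_414[simplified] Dec3_421[simplified] Dec3_422[simplified] Dec3_423[simplified] Dec3_424[simplified] Dec3_431[simplified] Dec3_432[simplified] Dec3_433[simplified] Dec3_434[simplified] Dec3_441[simplified] Dec3_442[simplified] Dec3_443[simplified] Dec3_444[simplified])
lemma dec0: "Dec 0 a b c"
  unfolding Dec_def by (rule exI[of _ "\<lambda>t. 1"]) (simp add: wedge_dl_def J_def Om0 sign_id)
lemma dec_all: assumes "k \<le> 3" shows "Dec k a b c"
proof -
  have m: "x \<in> {1,2,3,4::4}" for x using UNIV_4 by auto
  have "k = 0 \<or> k = 1 \<or> k = 2 \<or> k = 3" using assms by auto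
  then show ?thesis using dec0 dec1_all dec2_all dec3_all m by blast
qed

definition mon :: "(4 \<Rightarrow> nat) \<Rightarrow> real^4 \<Rightarrow> real" where
  "mon \<alpha> x = (\<Prod>i\<in>UNIV. (x$i)^(\<alpha> i))"

definition idx :: "4 \<Rightarrow> nat" where
  "idx i = (if i = 1 then 0 else if i = 2 then 1 else if i = 3 then 2 else 3)"

definition ex :: "nat \<Rightarrow> (4 \<Rightarrow> nat) \<Rightarrow> nat" where
  "ex m \<alpha> = (\<Sum>i\<in>UNIV. \<alpha> i * m ^ idx i)"

lemma digit: "0 < (m::nat) \<Longrightarrow> a < m \<Longrightarrow> a' < m \<Longrightarrow> a + m * X = a' + m * X' \<Longrightarrow> a = a' \<and> X = X'"
proof -
  assume m: "0 < m" "a < m" "a' < m" and e: "a + m * X = a' + m * X'"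
  have "(a + m * X) mod m = a" "(a + m * X) div m = X" using m by simp_all
  moreover have "(a' + m * X') mod m = a'" "(a' + m * X') div m = X'" using m by simp_all
  ultimately show ?thesis using e by metis
qed

lemma ex_4: "ex m \<alpha> = \<alpha> 1 + m * (\<alpha> 2 + m * (\<alpha> 3 + m * \<alpha> 4))"
  by (simp add: ex_def sum_4 idx_def algebra_simps power2_eq_square power3_eq_cube)

lemma ex_inj: assumes "\<forall>i. \<alpha> i < m" "\<forall>i. \<beta> i < m" "ex m \<alpha> = ex m \<beta>" shows "\<alpha> = \<beta>"
proof -
  have m: "0 < m" using assms(1) by (metis gr_zeroI not_less0)
  have "\<alpha> 1 = \<beta> 1 \<and> \<alpha> 2 + m * (\<alpha> 3 + m * \<alpha> 4) = \<beta> 2 + m * (\<beta> 3 + m * \<beta> 4)"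
    using digit[OF m] assms ex_4 by metis
  moreover then have "\<alpha> 2 = \<beta> 2 \<and> \<alpha> 3 + m * \<alpha> 4 = \<beta> 3 + m * \<beta> 4"
    using digit[OF m] assms by metis
  moreover then have "\<alpha> 3 = \<beta> 3 \<and> \<alpha> 4 = \<beta> 4"
    using digit[OF m] assms by (metis add_left_cancel mult_cancel_left1 nat_mult_eq_cancel1)
  ultimately show ?thesis using forall_4[of "\<lambda>i. \<alpha> i = \<beta> i"] by (auto simp: fun_eq_iff)
qed

lemma mon_y: "mon \<alpha> (\<chi> i. t ^ (m ^ idx i)) = t ^ ex m \<alpha>"
  by (simp add: mon_def ex_def power_sum power_mult[symmetric] mult.commute)

lemma mon_scale: "mon \<alpha> ((c::real) *\<^sub>R x) = c ^ (sum \<alpha> UNIV) * mon \<alpha> x"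
  by (simp add: mon_def power_sum power_mult_distrib prod.distrib)

lemma mon_indep: assumes fin: "finite A0" and deg: "\<forall>\<alpha>\<in>A0. sum \<alpha> UNIV = n"
  and z: "\<forall>x\<in>T3. (\<Sum>\<alpha>\<in>A0. d \<alpha> * mon \<alpha> x) = 0" and a0: "\<alpha>0 \<in> A0"
  shows "d \<alpha>0 = 0"
proof -
  define m where "m = Suc n"
  have lt: "\<forall>i. \<alpha> i < m" if "\<alpha> \<in> A0" for \<alpha>
  proof
    fix i
    have "\<alpha> i \<le> sum \<alpha> UNIV" by (rule member_le_sum) auto
    then show "\<alpha> i < m" using deg that m_def by auto
  qed
  define N where "N = (\<Sum>\<alpha>\<in>A0. ex m \<alpha>)"
  define c where "c j = (\<Sum>\<alpha>\<in>{\<alpha>\<in>A0. ex m \<alpha> = j}. d \<alpha>)" for j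
  have poly0: "(\<Sum>j\<le>N. c j * t ^ j) = 0" if t: "t > 0" for t :: real
  proof -
    define y where "y = (\<chi> i. t ^ (m ^ idx i))"
    define S where "S = (\<Sum>i\<in>UNIV. y $ i)"
    have ypos: "y $ i > 0" for i using t by (simp add: y_def)
    have Spos: "S > 0" unfolding S_def using ypos by (simp add: sum_pos)
    have xT: "(1/S) *\<^sub>R y \<in> T3"
      unfolding T3_def using ypos Spos by (auto simp: sum_divide_distrib[symmetric] S_def less_imp_le)
    have "(\<Sum>\<alpha>\<in>A0. d \<alpha> * mon \<alpha> ((1/S) *\<^sub>R y)) = 0" using z xT by blast
    then have "(\<Sum>\<alpha>\<in>A0. d \<alpha> * ((1/S)^n * t ^ ex m \<alpha>)) = 0"
      using deg by (simp add: mon_scale mon_y y_def cong: sum.cong)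
    then have "(1/S)^n * (\<Sum>\<alpha>\<in>A0. d \<alpha> * t ^ ex m \<alpha>) = 0"
      by (simp add: sum_distrib_left algebra_simps)
    then have e1: "(\<Sum>\<alpha>\<in>A0. d \<alpha> * t ^ ex m \<alpha>) = 0" using Spos by simp
    have sub: "ex m ` A0 \<subseteq> {..N}"
      unfolding N_def using fin by (auto intro: member_le_sum)
    have "(\<Sum>j\<le>N. c j * t ^ j) = (\<Sum>j\<le>N. \<Sum>\<alpha>\<in>{\<alpha>\<in>A0. ex m \<alpha> = j}. d \<alpha> * t ^ ex m \<alpha>)"
      unfolding c_def by (simp add: sum_distrib_right)
    also have "\<dots> = (\<Sum>\<alpha>\<in>A0. d \<alpha> * t ^ ex m \<alpha>)"
      by (rule sum.group[OF fin _ sub]) simp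
    finally show ?thesis using e1 by simp
  qed
  have "{0<..} \<subseteq> {t::real. (\<Sum>j\<le>N. c j * t ^ j) = 0}" using poly0 by auto
  then have "\<not> finite {t::real. (\<Sum>j\<le>N. c j * t ^ j) = 0}"
    using infinite_Ioi[of "0::real"] finite_subset by blast
  then have call: "\<forall>j\<le>N. c j = 0" using polyfun_finite_roots[of c N] by blast
  have "ex m \<alpha>0 \<le> N" unfolding N_def using fin a0 by (auto intro: member_le_sum)
  then have "c (ex m \<alpha>0) = 0" using call by blast
  moreover have "{\<alpha>\<in>A0. ex m \<alpha> = ex m \<alpha>0} = {\<alpha>0}"
    using a0 lt ex_inj by blast
  ultimately show ?thesis unfolding c_def by simp
qed

lemma sum_apply2: "(sum f S) x vs = (\<Sum>i\<in>S. f i x vs)"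
  by (induct S rule: infinite_finite_induct) auto

lemma fscale_apply: "fscale c f x vs = c * f x vs" by (simp add: fscale_def)

definition Aset :: "int \<Rightarrow> (4 \<Rightarrow> nat) set" where "Aset r = {\<alpha>. int (sum \<alpha> UNIV) = r}"
definition Hf :: "nat \<Rightarrow> (4 \<Rightarrow> nat) \<Rightarrow> 4\<times>4\<times>4\<times>4 \<Rightarrow> (real^4 \<Rightarrow> (nat \<Rightarrow> real^4) \<Rightarrow> real)" where
  "Hf k \<alpha> t = restr_T3 k (\<lambda>x vs. mon \<alpha> x * Om k t vs)"
definition Bas :: "int \<Rightarrow> nat \<Rightarrow> (real^4 \<Rightarrow> (nat \<Rightarrow> real^4) \<Rightarrow> real) set" where
  "Bas r k = (\<lambda>(\<alpha>,t). Hf k \<alpha> t) ` (Aset r \<times> J k)"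

lemma fin_deg: "finite {\<beta>::4\<Rightarrow>nat. int (sum \<beta> UNIV) \<le> r}"
proof -
  have "{\<beta>::4\<Rightarrow>nat. int (sum \<beta> UNIV) \<le> r} \<subseteq> PiE UNIV (\<lambda>_. {..nat r})"
  proof
    fix \<beta> :: "4 \<Rightarrow> nat" assume "\<beta> \<in> {\<beta>. int (sum \<beta> UNIV) \<le> r}"
    then have "int (sum \<beta> UNIV) \<le> r" by simp
    moreover have "\<beta> i \<le> sum \<beta> UNIV" for i by (rule member_le_sum) auto
    ultimately have "int (\<beta> i) \<le> r" for i by (meson dual_order.trans of_nat_le_iff)
    then have "\<beta> i \<le> nat r" for i by (metis nat_int nat_mono)
    then show "\<beta> \<in> PiE UNIV (\<lambda>_. {..nat r})" by (simp add: PiE_iff)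
  qed
  moreover have "finite (PiE (UNIV::4 set) (\<lambda>_. {..nat r}))" by (rule finite_PiE) auto
  ultimately show ?thesis by (rule finite_subset)
qed

lemma poly_fun_mon: assumes "int (sum \<alpha> UNIV) \<le> r" shows "poly_fun r (\<lambda>x. K * mon \<alpha> x)"
proof -
  let ?D = "{\<beta>::4\<Rightarrow>nat. int (sum \<beta> UNIV) \<le> r}"
  have "(\<lambda>x. K * mon \<alpha> x) = (\<lambda>x. \<Sum>\<beta>\<in>?D. (if \<beta> = \<alpha> then K else 0) * (\<Prod>i\<in>UNIV. (x $ i) ^ (\<beta> i)))"
  proof
    fix x
    have "(\<Sum>\<beta>\<in>?D. (if \<beta> = \<alpha> then K else 0) * (\<Prod>i\<in>UNIV. (x $ i) ^ (\<beta> i)))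
       = (\<Sum>\<beta>\<in>?D. if \<beta> = \<alpha> then K * (\<Prod>i\<in>UNIV. (x $ i) ^ (\<beta> i)) else 0)"
      by (rule sum.cong) auto
    also have "\<dots> = K * mon \<alpha> x" using fin_deg[of r] assms by (simp add: mon_def)
    finally show "K * mon \<alpha> x = (\<Sum>\<beta>\<in>?D. (if \<beta> = \<alpha> then K else 0) * (\<Prod>i\<in>UNIV. (x $ i) ^ (\<beta> i)))" by simp
  qed
  then show ?thesis unfolding poly_fun_def by (rule exI[of _ "\<lambda>\<beta>. if \<beta> = \<alpha> then K else 0"])
qed

lemma Hf_in: assumes "\<alpha> \<in> Aset r" shows "Hf k \<alpha> t \<in> PrLk r k"
proof -
  define p where "p s x = (\<Prod>i<k. F k t i (s i)) * mon \<alpha> x" for s x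
  have pf: "\<forall>s. poly_fun r (p s)" using assms poly_fun_mon unfolding p_def Aset_def by auto
  have "form_eval k p = (\<lambda>x vs. mon \<alpha> x * Om k t vs)"
    unfolding form_eval_def p_def Om_def W_expand by (simp add: fun_eq_iff sum_distrib_left algebra_simps)
  then have "Hf k \<alpha> t = restr_T3 k (form_eval k p)" unfolding Hf_def by simp
  then show ?thesis using pf unfolding PrLk_def by blast
qed

lemma Bas_sub: "Bas r k \<subseteq> PrLk r k"
  unfolding Bas_def using Hf_in by auto

lemma poly_fun_add: "poly_fun r p \<Longrightarrow> poly_fun r q \<Longrightarrow> poly_fun r (\<lambda>x. p x + q x)"
  unfolding poly_fun_def
proof (elim exE)
  fix c1 c2 assume h: "p = (\<lambda>x. \<Sum>\<alpha>\<in>{\<alpha>. int (sum \<alpha> UNIV) \<le> r}. c1 \<alpha> * (\<Prod>i\<in>UNIV. x $ i ^ \<alpha> i))"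
     "q = (\<lambda>x. \<Sum>\<alpha>\<in>{\<alpha>. int (sum \<alpha> UNIV) \<le> r}. c2 \<alpha> * (\<Prod>i\<in>UNIV. x $ i ^ \<alpha> i))"
  show "\<exists>c. (\<lambda>x. p x + q x) = (\<lambda>x. \<Sum>\<alpha>\<in>{\<alpha>. int (sum \<alpha> UNIV) \<le> r}. c \<alpha> * (\<Prod>i\<in>UNIV. x $ i ^ \<alpha> i))"
    by (rule exI[of _ "\<lambda>\<alpha>. c1 \<alpha> + c2 \<alpha>"]) (simp add: h sum.distrib algebra_simps)
qed

lemma poly_fun_scale: "poly_fun r p \<Longrightarrow> poly_fun r (\<lambda>x. a * p x)"
  unfolding poly_fun_def
proof (elim exE)
  fix c1 assume h: "p = (\<lambda>x. \<Sum>\<alpha>\<in>{\<alpha>. int (sum \<alpha> UNIV) \<le> r}. c1 \<alpha> * (\<Prod>i\<in>UNIV. x $ i ^ \<alpha> i))"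
  show "\<exists>c. (\<lambda>x. a * p x) = (\<lambda>x. \<Sum>\<alpha>\<in>{\<alpha>. int (sum \<alpha> UNIV) \<le> r}. c \<alpha> * (\<Prod>i\<in>UNIV. x $ i ^ \<alpha> i))"
    by (rule exI[of _ "\<lambda>\<alpha>. a * c1 \<alpha>"]) (simp add: h sum_distrib_left algebra_simps)
qed

lemma poly_fun_zero: "poly_fun r (\<lambda>x. 0)"
  unfolding poly_fun_def by (rule exI[of _ "\<lambda>_. 0"]) simp

lemma PrLk_subspace: "FM.subspace (PrLk r k)"
proof (rule FM.subspaceI)
  show "0 \<in> PrLk r k"
    unfolding PrLk_def
    by (rule CollectI, rule exI[of _ "\<lambda>s x. 0"])
       (auto simp: poly_fun_zero restr_T3_def form_eval_def fun_eq_iff)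
next
  fix f g assume "f \<in> PrLk r k" "g \<in> PrLk r k"
  then obtain p q where f: "f = restr_T3 k (form_eval k p)" "\<forall>s. poly_fun r (p s)"
    and g: "g = restr_T3 k (form_eval k q)" "\<forall>s. poly_fun r (q s)" unfolding PrLk_def by blast
  have "f + g = restr_T3 k (form_eval k (\<lambda>s x. p s x + q s x))"
    unfolding f g by (auto simp: restr_T3_def form_eval_def fun_eq_iff sum.distrib algebra_simps)
  moreover have "\<forall>s. poly_fun r (\<lambda>x. p s x + q s x)" using f g poly_fun_add by blast
  ultimately show "f + g \<in> PrLk r k" unfolding PrLk_def by blast
next
  fix c f assume "f \<in> PrLk r k"
  then obtain p where f: "f = restr_T3 k (form_eval k p)" "\<forall>s. poly_fun r (p s)"
    unfolding PrLk_def by blast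
  have "fscale c f = restr_T3 k (form_eval k (\<lambda>s x. c * p s x))"
    unfolding f by (auto simp: fscale_def restr_T3_def form_eval_def fun_eq_iff sum_distrib_left algebra_simps)
  moreover have "\<forall>s. poly_fun r (\<lambda>x. c * p s x)" using f poly_fun_scale by blast
  ultimately show "fscale c f \<in> PrLk r k" unfolding PrLk_def by blast
qed

definition upd :: "(4 \<Rightarrow> nat) \<Rightarrow> 4 \<Rightarrow> 4 \<Rightarrow> nat" where
  "upd \<beta> i = (\<lambda>j. \<beta> j + (if j = i then 1 else 0))"

lemma mon_upd: "mon (upd \<beta> i) x = mon \<beta> x * x $ i"
proof -
  have "mon (upd \<beta> i) x = (\<Prod>j\<in>UNIV. (x$j)^(\<beta> j) * (if j = i then x$j else 1))"
    unfolding mon_def upd_def by (intro prod.cong) (auto simp: power_add)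
  also have "\<dots> = mon \<beta> x * x $ i" by (simp add: prod.distrib mon_def)
  finally show ?thesis .
qed

lemma sum_upd: "sum (upd \<beta> i) UNIV = Suc (sum \<beta> UNIV)"
  by (simp add: upd_def sum.distrib)

lemma mon_T3: "x \<in> T3 \<Longrightarrow> mon \<beta> x = (\<Sum>i\<in>UNIV. mon (upd \<beta> i) x)"
  by (simp add: mon_upd sum_distrib_left[symmetric] T3_def)

lemma restr_eqI: "(\<And>x vs. x \<in> T3 \<Longrightarrow> (\<forall>j<k. vs j \<in> tangentV) \<Longrightarrow> f x vs = g x vs) \<Longrightarrow> restr_T3 k f = restr_T3 k g"
  by (auto simp: restr_T3_def fun_eq_iff)

lemma sum_if_const: "(\<Sum>i\<in>S. c i * (if Q then g i else 0)) = (if Q then \<Sum>i\<in>S. c i * g i else (0::real))"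
  by (cases Q) simp_all
lemma sum_if_const1: "(\<Sum>i\<in>S. (if Q then g i else 0)) = (if Q then \<Sum>i\<in>S. g i else (0::real))"
  by (cases Q) simp_all

lemma restr_sum: "restr_T3 k (\<lambda>x vs. \<Sum>i\<in>S. c i * f i x vs) = (\<Sum>i\<in>S. fscale (c i) (restr_T3 k (f i)))"
  unfolding restr_T3_def fun_eq_iff sum_apply2 fscale_apply
  by (subst sum_if_const) simp

lemma restr_sum1: "restr_T3 k (\<lambda>x vs. \<Sum>i\<in>S. f i x vs) = (\<Sum>i\<in>S. restr_T3 k (f i))"
  unfolding restr_T3_def fun_eq_iff sum_apply2
  by (subst sum_if_const1) simp

lemma H_span: assumes t: "t \<in> J k" and b: "int (sum \<beta> UNIV) \<le> r" shows "Hf k \<beta> t \<in> FM.span (Bas r k)"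
proof -
  have r0: "0 \<le> r" using b by linarith
  have "\<forall>\<beta>. sum \<beta> UNIV + n = nat r \<longrightarrow> Hf k \<beta> t \<in> FM.span (Bas r k)" for n
  proof (induction n)
    case 0
    show ?case
    proof (intro allI impI)
      fix \<beta> :: "4 \<Rightarrow> nat" assume "sum \<beta> UNIV + 0 = nat r"
      then have e: "int (sum \<beta> UNIV) = r" using r0 by (metis add.right_neutral int_nat_eq)
      then have "\<beta> \<in> Aset r" unfolding Aset_def by blast
      then have "Hf k \<beta> t \<in> Bas r k" using t unfolding Bas_def by force
      then show "Hf k \<beta> t \<in> FM.span (Bas r k)" by (rule FM.span_base)
    qed
  next
    case (Suc n)
    show ?case
    proof (intro allI impI)
      fix \<beta> :: "4 \<Rightarrow> nat" assume h: "sum \<beta> UNIV + Suc n = nat r"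
      have "Hf k \<beta> t = restr_T3 k (\<lambda>x vs. \<Sum>i\<in>UNIV. mon (upd \<beta> i) x * Om k t vs)"
        unfolding Hf_def by (intro restr_eqI) (simp add: sum_distrib_right[symmetric] mon_T3[symmetric])
      also have "\<dots> = (\<Sum>i\<in>UNIV. Hf k (upd \<beta> i) t)"
        unfolding restr_sum1 Hf_def ..
      also have "\<dots> \<in> FM.span (Bas r k)"
      proof (rule FM.span_sum)
        fix i :: 4
        have "sum (upd \<beta> i) UNIV + n = nat r" using h sum_upd by simp
        then show "Hf k (upd \<beta> i) t \<in> FM.span (Bas r k)" using Suc.IH by blast
      qed
      finally show "Hf k \<beta> t \<in> FM.span (Bas r k)" .
    qed
  qed
  moreover have "sum \<beta> UNIV + (nat r - sum \<beta> UNIV) = nat r" using b by linarith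
  ultimately show ?thesis by blast
qed

lemma wedge_s: assumes k: "k \<le> 3" shows "wedge_dl k s = wedge_dl k (\<lambda>i. if i = 0 then s 0 else if i = 1 then s 1 else s 2)"
proof -
  have hs: "(if i = 0 then s 0 else if i = 1 then s 1 else s 2) = s i" if "i < k" for i
  proof -
    have "i = 0 \<or> i = 1 \<or> i = 2" using that k by linarith
    then show ?thesis by auto
  qed
  show ?thesis
    unfolding wedge_dl_def fun_eq_iff
    by (intro allI sum.cong refl arg_cong2[where f="(*)"] prod.cong) (simp add: hs)
qed

lemma G_span: assumes k: "k \<le> 3" and b: "int (sum \<beta> UNIV) \<le> r"
  shows "restr_T3 k (\<lambda>x vs. mon \<beta> x * wedge_dl k s vs) \<in> FM.span (Bas r k)"
proof -
  obtain C where C: "\<forall>vs. (\<forall>j<k. vs j \<in> tangentV) \<longrightarrow>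
     wedge_dl k (\<lambda>i. if i = 0 then s 0 else if i = 1 then s 1 else s 2) vs = (\<Sum>t\<in>J k. C t * Om k t vs)"
    using dec_all[OF k] unfolding Dec_def by blast
  have "restr_T3 k (\<lambda>x vs. mon \<beta> x * wedge_dl k s vs) = restr_T3 k (\<lambda>x vs. \<Sum>t\<in>J k. C t * (mon \<beta> x * Om k t vs))"
    using C wedge_s[OF k, of s] by (intro restr_eqI) (simp add: sum_distrib_left algebra_simps)
  also have "\<dots> = (\<Sum>t\<in>J k. fscale (C t) (Hf k \<beta> t))"
    unfolding restr_sum Hf_def ..
  also have "\<dots> \<in> FM.span (Bas r k)"
    by (intro FM.span_sum FM.span_scale H_span b)
  finally show ?thesis .
qed

lemma PrLk_span: assumes k: "k \<le> 3" shows "PrLk r k \<subseteq> FM.span (Bas r k)"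
proof
  fix f assume "f \<in> PrLk r k"
  then obtain p where f: "f = restr_T3 k (form_eval k p)" and pf: "\<forall>s. poly_fun r (p s)"
    unfolding PrLk_def by blast
  let ?D = "{\<beta>::4\<Rightarrow>nat. int (sum \<beta> UNIV) \<le> r}"
  have "\<forall>s. \<exists>c. p s = (\<lambda>x. \<Sum>\<beta>\<in>?D. c \<beta> * mon \<beta> x)"
    using pf unfolding poly_fun_def mon_def by blast
  then obtain c where c: "\<forall>s. p s = (\<lambda>x. \<Sum>\<beta>\<in>?D. c s \<beta> * mon \<beta> x)" by metis
  let ?PS = "PiE {..<k} (\<lambda>_. UNIV::4 set)"
  have c': "p s x = (\<Sum>\<beta>\<in>?D. c s \<beta> * mon \<beta> x)" for s x using c by simp
  have "form_eval k p x vs = (\<Sum>i\<in>?PS \<times> ?D. c (fst i) (snd i) * (mon (snd i) x * wedge_dl k (fst i) vs))" for x vs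
  proof -
    have "form_eval k p x vs = (\<Sum>s\<in>?PS. \<Sum>\<beta>\<in>?D. c s \<beta> * (mon \<beta> x * wedge_dl k s vs))"
      unfolding form_eval_def c' sum_distrib_right by (intro sum.cong refl) (simp add: algebra_simps)
    also have "\<dots> = (\<Sum>(s,\<beta>)\<in>?PS \<times> ?D. c s \<beta> * (mon \<beta> x * wedge_dl k s vs))"
      by (rule sum.cartesian_product)
    finally show ?thesis by (simp add: case_prod_beta)
  qed
  then have "form_eval k p = (\<lambda>x vs. \<Sum>i\<in>?PS \<times> ?D. c (fst i) (snd i) * (mon (snd i) x * wedge_dl k (fst i) vs))"
    by (simp add: fun_eq_iff)
  then have "f = restr_T3 k (\<lambda>x vs. \<Sum>i\<in>?PS \<times> ?D. c (fst i) (snd i) * (mon (snd i) x * wedge_dl k (fst i) vs))"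
    using f by simp
  also have "\<dots> = (\<Sum>i\<in>?PS \<times> ?D. fscale (c (fst i) (snd i)) (restr_T3 k (\<lambda>x vs. mon (snd i) x * wedge_dl k (fst i) vs)))"
    by (rule restr_sum)
  also have "\<dots> \<in> FM.span (Bas r k)"
    by (intro FM.span_sum FM.span_scale G_span k) auto
  finally show "f \<in> FM.span (Bas r k)" .
qed

lemma span_eq: assumes "k \<le> 3" shows "FM.span (Bas r k) = PrLk r k"
  using FM.span_minimal[OF Bas_sub PrLk_subspace] PrLk_span[OF assms] by blast

definition ee :: "4 \<Rightarrow> real^4" where "ee a = (\<chi> i. if i = a then 1 else 0)"

definition Etest :: "nat \<Rightarrow> 4\<times>4\<times>4\<times>4 \<Rightarrow> nat \<Rightarrow> real^4" where
  "Etest k t j = (case t of (a,b,c,d) \<Rightarrow>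
     if k = 1 then ee a + ee b - ee c - ee d
     else if k = 2 then (if j = 0 then ee a - ee b else ee c - ee d)
     else (if j = 0 then ee a - ee b else if j = 1 then ee a - ee c else ee a - ee d))"

lemma sum_ee: "(\<Sum>i\<in>UNIV. ee a $ i) = 1"
  by (simp add: ee_def)

lemma tanv1: "ee a - ee b \<in> tangentV"
  unfolding tangentV_def by (simp add: ee_def sum_subtractf sum.distrib)
lemma tanv2: "ee a + ee b - ee c - ee d \<in> tangentV"
  unfolding tangentV_def by (simp add: ee_def sum_subtractf sum.distrib)
lemma Etan: "Etest k t j \<in> tangentV"
  by (cases t) (simp add: Etest_def tanv1 tanv2)

definition ce :: "nat \<Rightarrow> real" where "ce k = (if k = 0 then 1 else 4)"

lemma Ev1_00: "Om 1 (1,2,3,4) (Etest 1 (1,2,3,4)) = 4"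
  by (simp add: OmAll Etest_def ee_def)

lemma Ev1_01: "Om 1 (1,3,2,4) (Etest 1 (1,2,3,4)) = 0"
  by (simp add: OmAll Etest_def ee_def)

lemma Ev1_02: "Om 1 (1,4,2,3) (Etest 1 (1,2,3,4)) = 0"
  by (simp add: OmAll Etest_def ee_def)

lemma Ev1_10: "Om 1 (1,2,3,4) (Etest 1 (1,3,2,4)) = 0"
  by (simp add: OmAll Etest_def ee_def)

lemma Ev1_11: "Om 1 (1,3,2,4) (Etest 1 (1,3,2,4)) = 4"
  by (simp add: OmAll Etest_def ee_def)

lemma Ev1_12: "Om 1 (1,4,2,3) (Etest 1 (1,3,2,4)) = 0"
  by (simp add: OmAll Etest_def ee_def)

lemma Ev1_20: "Om 1 (1,2,3,4) (Etest 1 (1,4,2,3)) = 0"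
  by (simp add: OmAll Etest_def ee_def)

lemma Ev1_21: "Om 1 (1,3,2,4) (Etest 1 (1,4,2,3)) = 0"
  by (simp add: OmAll Etest_def ee_def)

lemma Ev1_22: "Om 1 (1,4,2,3) (Etest 1 (1,4,2,3)) = 4"
  by (simp add: OmAll Etest_def ee_def)

lemma Ev2_00: "Om 2 (1,2,3,4) (Etest 2 (1,2,3,4)) = 4"
  by (simp add: OmAll Etest_def ee_def)

lemma Ev2_01: "Om 2 (1,3,2,4) (Etest 2 (1,2,3,4)) = 0"
  by (simp add: OmAll Etest_def ee_def)

lemma Ev2_02: "Om 2 (1,4,2,3) (Etest 2 (1,2,3,4)) = 0"
  by (simp add: OmAll Etest_def ee_def)

lemma Ev2_10: "Om 2 (1,2,3,4) (Etest 2 (1,3,2,4)) = 0"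
  by (simp add: OmAll Etest_def ee_def)

lemma Ev2_11: "Om 2 (1,3,2,4) (Etest 2 (1,3,2,4)) = 4"
  by (simp add: OmAll Etest_def ee_def)

lemma Ev2_12: "Om 2 (1,4,2,3) (Etest 2 (1,3,2,4)) = 0"
  by (simp add: OmAll Etest_def ee_def)

lemma Ev2_20: "Om 2 (1,2,3,4) (Etest 2 (1,4,2,3)) = 0"
  by (simp add: OmAll Etest_def ee_def)

lemma Ev2_21: "Om 2 (1,3,2,4) (Etest 2 (1,4,2,3)) = 0"
  by (simp add: OmAll Etest_def ee_def)

lemma Ev2_22: "Om 2 (1,4,2,3) (Etest 2 (1,4,2,3)) = 4"
  by (simp add: OmAll Etest_def ee_def)

lemma Ev3_00: "Om 3 (1,2,3,4) (Etest 3 (1,2,3,4)) = 4"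
  by (simp add: OmAll Etest_def ee_def)

lemma Eval: assumes "k \<le> 3" "t0 \<in> J k" "t \<in> J k"
  shows "Om k t (Etest k t0) = (if t = t0 then ce k else 0)"
proof -
  have "k = 0 \<or> k = 1 \<or> k = 2 \<or> k = 3" using assms by auto
  moreover have "k = 0 \<Longrightarrow> ?thesis" using assms(2,3) by (simp add: J_def Om0 ce_def)
  moreover have "k = 1 \<Longrightarrow> ?thesis" using assms(2,3) unfolding J_def ce_def
    by (simp only: insert_iff empty_iff simp_thms if_True if_False) (elim disjE; simp only: Ev1_00 Ev1_01 Ev1_02 Ev1_10 Ev1_11 Ev1_12 Ev1_20 Ev1_21 Ev1_22 prod.inject; simp)
  moreover have "k = 2 \<Longrightarrow> ?thesis" using assms(2,3) unfolding J_def ce_def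
    by (simp only: insert_iff empty_iff simp_thms if_True if_False) (elim disjE; simp only: Ev2_00 Ev2_01 Ev2_02 Ev2_10 Ev2_11 Ev2_12 Ev2_20 Ev2_21 Ev2_22 prod.inject; simp)
  moreover have "k = 3 \<Longrightarrow> ?thesis" using assms(2,3) unfolding J_def ce_def
    by (simp add: Ev3_00)
  ultimately show ?thesis by blast
qed

lemma Kl: assumes k: "k \<le> 3" and fin: "finite I'" and sub: "I' \<subseteq> Aset r \<times> J k"
  and Z: "\<forall>x\<in>T3. \<forall>vs. (\<forall>j<k. vs j \<in> tangentV) \<longrightarrow> (\<Sum>i\<in>I'. u i * (mon (fst i) x * Om k (snd i) vs)) = 0"
  and i0: "i0 \<in> I'"
  shows "u i0 = 0"
proof -
  obtain \<alpha>0 t0 where i0e: "i0 = (\<alpha>0, t0)" by (cases i0)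
  have t0: "t0 \<in> J k" using sub i0 i0e by auto
  define S where "S = {i\<in>I'. snd i = t0}"
  define A0 where "A0 = fst ` S"
  have injS: "inj_on fst S" unfolding S_def inj_on_def by (auto simp: prod_eq_iff)
  have finA: "finite A0" unfolding A0_def S_def using fin by auto
  have ce0: "ce k \<noteq> 0" by (simp add: ce_def)
  have z: "(\<Sum>\<alpha>\<in>A0. u (\<alpha>, t0) * mon \<alpha> x) = 0" if x: "x \<in> T3" for x
  proof -
    have "0 = (\<Sum>i\<in>I'. u i * (mon (fst i) x * Om k (snd i) (Etest k t0)))"
      using Z x Etan by simp
    also have "\<dots> = (\<Sum>i\<in>I'. if snd i = t0 then ce k * (u i * mon (fst i) x) else 0)"
    proof (intro sum.cong refl)
      fix i assume "i \<in> I'"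
      then have "snd i \<in> J k" using sub by auto
      then show "u i * (mon (fst i) x * Om k (snd i) (Etest k t0)) = (if snd i = t0 then ce k * (u i * mon (fst i) x) else 0)"
        using Eval[OF k t0] by simp
    qed
    also have "\<dots> = (\<Sum>i\<in>S. ce k * (u i * mon (fst i) x))"
      unfolding S_def using fin by (simp add: sum.inter_filter)
    also have "\<dots> = ce k * (\<Sum>i\<in>S. u (fst i, t0) * mon (fst i) x)"
      unfolding sum_distrib_left
    proof (intro sum.cong refl)
      fix i assume "i \<in> S"
      then have "i = (fst i, t0)" unfolding S_def by (metis (mono_tags, lifting) mem_Collect_eq prod.collapse)
      then show "ce k * (u i * mon (fst i) x) = ce k * (u (fst i, t0) * mon (fst i) x)" by metis
    qed
    also have "(\<Sum>i\<in>S. u (fst i, t0) * mon (fst i) x) = (\<Sum>\<alpha>\<in>A0. u (\<alpha>, t0) * mon \<alpha> x)"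
      unfolding A0_def using sum.reindex[OF injS, of "\<lambda>\<alpha>. u (\<alpha>, t0) * mon \<alpha> x"] by simp
    finally show ?thesis using ce0 by simp
  qed
  have deg: "\<forall>\<alpha>\<in>A0. sum \<alpha> UNIV = nat r"
  proof
    fix \<alpha> assume "\<alpha> \<in> A0"
    then obtain i where i: "i \<in> I'" "\<alpha> = fst i" unfolding A0_def S_def by auto
    then have "fst i \<in> Aset r" using sub by (auto simp: mem_Times_iff)
    then have "int (sum \<alpha> UNIV) = r" unfolding Aset_def i(2) by (rule CollectD)
    then show "sum \<alpha> UNIV = nat r" by (metis nat_int)
  qed
  have "\<alpha>0 \<in> A0" unfolding A0_def S_def using i0 i0e by force
  from mon_indep[OF finA deg _ this, of "\<lambda>\<alpha>. u (\<alpha>, t0)"] z show ?thesis using i0e by simp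
qed

lemma Hf_eval: "x \<in> T3 \<Longrightarrow> (\<forall>j<k. vs j \<in> tangentV) \<Longrightarrow> Hf k \<alpha> t x vs = mon \<alpha> x * Om k t vs"
  by (simp add: Hf_def restr_T3_def)

lemma inj_Hf: assumes k: "k \<le> 3" shows "inj_on (\<lambda>(\<alpha>,t). Hf k \<alpha> t) (Aset r \<times> J k)"
proof (rule inj_onI)
  fix i j assume i: "i \<in> Aset r \<times> J k" and j: "j \<in> Aset r \<times> J k"
    and e: "(\<lambda>(\<alpha>,t). Hf k \<alpha> t) i = (\<lambda>(\<alpha>,t). Hf k \<alpha> t) j"
  show "i = j"
  proof (rule ccontr)
    assume ne: "i \<noteq> j"
    define u where "u l = (if l = i then 1 else (-1::real))" for l
    have Z: "\<forall>x\<in>T3. \<forall>vs. (\<forall>j<k. vs j \<in> tangentV) \<longrightarrow> (\<Sum>l\<in>{i,j}. u l * (mon (fst l) x * Om k (snd l) vs)) = 0"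
    proof (intro ballI allI impI)
      fix x vs assume x: "x \<in> T3" and vs: "\<forall>j<k. vs j \<in> tangentV"
      have "Hf k (fst i) (snd i) x vs = Hf k (fst j) (snd j) x vs"
        using e by (simp add: case_prod_beta)
      then have "mon (fst i) x * Om k (snd i) vs = mon (fst j) x * Om k (snd j) vs"
        using Hf_eval[OF x vs] by simp
      then show "(\<Sum>l\<in>{i,j}. u l * (mon (fst l) x * Om k (snd l) vs)) = 0"
        using ne by (simp add: u_def)
    qed
    have "u i = 0" by (rule Kl[OF k _ _ Z]) (use i j in auto)
    then show False by (simp add: u_def)
  qed
qed

lemma indep: assumes k: "k \<le> 3" shows "\<not> FM.dependent (Bas r k)"
proof
  assume "FM.dependent (Bas r k)"
  then obtain T u where T: "finite T" "T \<subseteq> Bas r k" "(\<Sum>v\<in>T. fscale (u v) v) = 0" and v0: "\<exists>v\<in>T. u v \<noteq> 0"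
    unfolding FM.dependent_explicit by blast
  let ?h = "\<lambda>(\<alpha>,t). Hf k \<alpha> t"
  define I' where "I' = {i \<in> Aset r \<times> J k. ?h i \<in> T}"
  have inj: "inj_on ?h I'" using inj_Hf[OF k] unfolding I'_def by (rule inj_on_subset) auto
  have TI: "T = ?h ` I'" using T(2) unfolding I'_def Bas_def by auto
  have finI: "finite I'" using T(1) TI inj finite_image_iff by metis
  have sub: "I' \<subseteq> Aset r \<times> J k" unfolding I'_def by auto
  have s0: "(\<Sum>i\<in>I'. fscale (u (?h i)) (?h i)) = 0"
    using T(3) unfolding TI sum.reindex[OF inj] by (simp add: o_def)
  have Z: "\<forall>x\<in>T3. \<forall>vs. (\<forall>j<k. vs j \<in> tangentV) \<longrightarrow> (\<Sum>i\<in>I'. u (?h i) * (mon (fst i) x * Om k (snd i) vs)) = 0"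
  proof (intro ballI allI impI)
    fix x vs assume x: "x \<in> T3" and vs: "\<forall>j<k. vs j \<in> tangentV"
    have "0 = (\<Sum>i\<in>I'. fscale (u (?h i)) (?h i)) x vs" using s0 by simp
    also have "\<dots> = (\<Sum>i\<in>I'. u (?h i) * (mon (fst i) x * Om k (snd i) vs))"
      unfolding sum_apply2 fscale_apply by (intro sum.cong refl) (simp add: case_prod_beta Hf_eval[OF x vs])
    finally show "(\<Sum>i\<in>I'. u (?h i) * (mon (fst i) x * Om k (snd i) vs)) = 0" by simp
  qed
  obtain v where v: "v \<in> T" "u v \<noteq> 0" using v0 by blast
  then obtain i where i: "i \<in> I'" "v = ?h i" using TI by blast
  have "u (?h i) = 0" by (rule Kl[OF k finI sub Z i(1)])
  then show False using v i by simp
qed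

lemma S_comp: "S_perm \<pi> x $ i = x $ \<pi> i" by (simp add: S_perm_def)

lemma sum_perm4: assumes "\<pi> permutes (UNIV::4 set)" shows "(\<Sum>i\<in>UNIV. f (\<pi> i)) = (\<Sum>i\<in>UNIV. (f i :: real))"
  using sum.permute[OF assms, of f] by (simp add: o_def)

lemma S_T3: assumes "\<pi> permutes (UNIV::4 set)" shows "S_perm \<pi> x \<in> T3 \<longleftrightarrow> x \<in> T3"
proof -
  have "(\<forall>i. 0 \<le> x $ \<pi> i) \<longleftrightarrow> (\<forall>i. 0 \<le> x $ i)"
    by (metis assms permutes_inverses(1))
  moreover have "(\<Sum>i\<in>UNIV. x $ \<pi> i) = (\<Sum>i\<in>UNIV. x $ i)" using sum_perm4[OF assms] .
  ultimately show ?thesis unfolding T3_def by (simp add: S_comp)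
qed

lemma S_tan: assumes "\<pi> permutes (UNIV::4 set)" shows "S_perm \<pi> v \<in> tangentV \<longleftrightarrow> v \<in> tangentV"
  using sum_perm4[OF assms, of "\<lambda>i. v $ i"] unfolding tangentV_def by (simp add: S_comp)

lemma mon_S: assumes p: "\<pi> permutes (UNIV::4 set)" shows "mon \<alpha> (S_perm \<pi> x) = mon (\<alpha> \<circ> inv \<pi>) x"
proof -
  have "mon (\<alpha> \<circ> inv \<pi>) x = (\<Prod>i\<in>UNIV. (x $ i) ^ (\<alpha> (inv \<pi> i)))" by (simp add: mon_def)
  also have "\<dots> = (\<Prod>i\<in>UNIV. (x $ \<pi> i) ^ (\<alpha> (inv \<pi> (\<pi> i))))"
    using prod.permute[OF p, of "\<lambda>i. (x $ i) ^ (\<alpha> (inv \<pi> i))"] by (simp add: o_def)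
  also have "\<dots> = mon \<alpha> (S_perm \<pi> x)" by (simp add: mon_def S_comp permutes_inverses(2)[OF p])
  finally show ?thesis by simp
qed

lemma sum_S: assumes p: "\<pi> permutes (UNIV::4 set)" shows "sum (\<alpha> \<circ> inv \<pi>) UNIV = sum \<alpha> UNIV"
  using sum.permute[OF permutes_inv[OF p], of \<alpha>] by simp

lemma Om_S: assumes "k \<le> 3"
  shows "Om k (a,b,c,d) (\<lambda>j. S_perm \<pi> (vs j)) = Om k (\<pi> a, \<pi> b, \<pi> c, \<pi> d) vs"
proof -
  have "k = 0 \<or> k = 1 \<or> k = 2 \<or> k = 3" using assms by auto
  then show ?thesis by (elim disjE) (simp_all only: Om0 OmAll S_comp)
qed

lemma J_distinct: "(a,b,c,d) \<in> J k \<Longrightarrow> distinct [a,b,c,d]"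
  unfolding J_def by (auto split: if_splits)

lemma P0: "P 0 t0" unfolding P_def J_def by (simp add: Om0)

lemma pull_Hf: assumes p: "\<pi> permutes (UNIV::4 set)"
  shows "pullback \<pi> (Hf k \<alpha> t) = restr_T3 k (\<lambda>x vs. mon (\<alpha> \<circ> inv \<pi>) x * Om k t (\<lambda>j. S_perm \<pi> (vs j)))"
  unfolding pullback_def Hf_def restr_T3_def fun_eq_iff
  by (auto simp: S_T3[OF p] S_tan[OF p] mon_S[OF p])

lemma invariance: assumes k: "k \<le> 3" and p: "\<pi> permutes (UNIV::4 set)" and b: "b \<in> Bas r k"
  shows "\<exists>b'\<in>Bas r k. pullback \<pi> b = b' \<or> pullback \<pi> b = - b'"
proof -
  obtain \<alpha> a b1 c d where al: "\<alpha> \<in> Aset r" and t: "(a,b1,c,d) \<in> J k" and be: "b = Hf k \<alpha> (a,b1,c,d)"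
    using b unfolding Bas_def by auto
  have "distinct [a,b1,c,d]" using J_distinct[OF t] .
  then have dist: "distinct [\<pi> a, \<pi> b1, \<pi> c, \<pi> d]" using permutes_inj[OF p] by (auto simp: inj_eq)
  have "P k (\<pi> a, \<pi> b1, \<pi> c, \<pi> d)"
  proof (cases "k = 0")
    case True then show ?thesis using P0 by simp
  next
    case False then show ?thesis using canon[OF dist _ k] by simp
  qed
  then obtain t' where t': "t' \<in> J k" and sg: "(\<forall>vs. Om k (\<pi> a, \<pi> b1, \<pi> c, \<pi> d) vs = Om k t' vs) \<or> (\<forall>vs. Om k (\<pi> a, \<pi> b1, \<pi> c, \<pi> d) vs = - Om k t' vs)"
    unfolding P_def by blast
  have al': "\<alpha> \<circ> inv \<pi> \<in> Aset r" using al unfolding Aset_def mem_Collect_eq sum_S[OF p] .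
  have mem: "Hf k (\<alpha> \<circ> inv \<pi>) t' \<in> Bas r k" using al' t' unfolding Bas_def by force
  have pb: "pullback \<pi> b = restr_T3 k (\<lambda>x vs. mon (\<alpha> \<circ> inv \<pi>) x * Om k (\<pi> a, \<pi> b1, \<pi> c, \<pi> d) vs)"
    unfolding be pull_Hf[OF p] Om_S[OF k] ..
  from sg show ?thesis
  proof
    assume h: "\<forall>vs. Om k (\<pi> a, \<pi> b1, \<pi> c, \<pi> d) vs = Om k t' vs"
    have "pullback \<pi> b = Hf k (\<alpha> \<circ> inv \<pi>) t'" unfolding pb Hf_def using h by simp
    then show ?thesis using mem by blast
  next
    assume h: "\<forall>vs. Om k (\<pi> a, \<pi> b1, \<pi> c, \<pi> d) vs = - Om k t' vs"
    have "pullback \<pi> b = - Hf k (\<alpha> \<circ> inv \<pi>) t'" unfolding pb Hf_def restr_T3_def using h by (auto simp: fun_eq_iff)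
    then show ?thesis using mem by blast
  qed
qed

theorem corollary2p12:
  fixes r :: int and k :: nat
  assumes "k \<le> 3"
  shows "\<exists>B. B \<subseteq> PrLk r k
            \<and> \<not> module.dependent fscale B
            \<and> module.span fscale B = PrLk r k
            \<and> (\<forall>\<pi>. \<pi> permutes (UNIV :: 4 set) \<longrightarrow>
                 (\<forall>b\<in>B. \<exists>b'\<in>B. pullback \<pi> b = b' \<or> pullback \<pi> b = - b'))"
  using Bas_sub[of r k] indep[OF assms, of r] span_eq[OF assms, of r] invariance[OF assms]
  by blast

end
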